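(* Let $p$ be a prime, $C\subseteq\mathbb{F}_p^{2n}$ a symplectic self-orthogonal code with stabilizer code $Q(C)\subseteq\mathbb{C}^{p^n}$, and let $\emptyset\neq I\subsetneq J\subsetneq\{1,\dots,n\}$. If $Q(C)$ is $(I,J)$-locally recoverable, then \[\sigma_I\left[\pi_J\left(C^{\perp_s}\right)\right]=\sigma_I(C).\]
   Context: Vectors of $\mathbb{F}_p^{2n}$ are written $(\mathbf a|\mathbf b)$, coordinate pairs $(a_j,b_j)$ indexed by $j\in\{1,\dots,n\}$. Symplectic form: $(\mathbf a|\mathbf b)\cdot_s(\mathbf c|\mathbf d)=\mathbf a\cdot\mathbf d-\mathbf b\cdot\mathbf c$; $C^{\perp_s}$ is the dual; $C$ is symplectic self-orthogonal if $C\subseteq C^{\perp_s}$. For $R\subseteq\{1,\dots,n\}$: $\pi_R(\mathbf a|\mathbf b)=(a_j|b_j)_{j\in R}$, puncturing $\pi_R(D)=\{\pi_R(\mathbf y):\mathbf y\in D\}$, shortening $\sigma_R(D)=\{\pi_R(\mathbf y):\mathbf y=(\mathbf a|\mathbf b)\in D,\ \mathrm{supp}(\mathbf a)\cup\mathrm{supp}(\mathbf b)\subseteq R\}$; the shortening at $I$ of a code with coordinate pairs indexed by $J\supseteq I$ is defined the same way. Quantum setting: $\xi=e^{2\pi\iota/p}$, $X(a)|x\rangle=|x+a\rangle$, $Z(b)|x\rangle=\xi^{bx}|x\rangle$ on $\mathbb C^p$, $E_{(\mathbf a,\mathbf b)}=\bigotimes_jX(a_j)Z(b_j)$. $Q(C)$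 is the common eigenspace $\{v:Ev=\lambda(E)v\ \forall E\in S\}$, $S$ the commutative group generated by scalars $\xi^\ell\mathcal I$ and $E_{\mathbf y}$, $\mathbf y\in C$, $\lambda$ a character of $S$ with $\lambda(\xi\mathcal I)=\xi$. Let $\Gamma(\rho)=p^{-2}\sum_{a,b}X(a)Z(b)\rho(X(a)Z(b))^\dagger$, and $\Gamma^I$ apply $\Gamma$ to the qudits indexed by $I$ and the identity elsewhere. For $\emptyset\ne I\subsetneq J$, a code $Q$ is $(I,J)$-locally recoverable if there is a trace-preserving quantum operation $\mathcal R$ acting only on the qudits indexed by $J$ (identity on the others) with $\mathcal R\circ\Gamma^I(|\varphi\rangle\langle\varphi|)=|\varphi\rangle\langle\varphi|$ for all $|\varphi\rangle\in Q$. *)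

theory Defs
  imports Complex_Main "HOL-Computational_Algebra.Primes"
begin

text \<open>Elements of F_p are represented by naturals below p. A vector (a|b) of F_p^{2n}
  (or more generally with coordinate pairs indexed by a finite set S) is a pair of functions
  nat => nat with values below p on S and value 0 outside S.\<close>

type_synonym svec = "(nat \<Rightarrow> nat) \<times> (nat \<Rightarrow> nat)"

definition basisOn :: "nat set \<Rightarrow> nat \<Rightarrow> (nat \<Rightarrow> nat) set" where
  "basisOn S p = {x. (\<forall>j\<in>S. x j < p) \<and> (\<forall>j. j \<notin> S \<longrightarrow> x j = 0)}"

definition Fvec :: "nat set \<Rightarrow> nat \<Rightarrow> svec set" where
  "Fvec S p = basisOn S p \<times> basisOn S p"

definition vadd :: "nat \<Rightarrow> svec \<Rightarrow> svec \<Rightarrow> svec" where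
  "vadd p y z = ((\<lambda>j. (fst y j + fst z j) mod p), (\<lambda>j. (snd y j + snd z j) mod p))"

definition vscale :: "nat \<Rightarrow> nat \<Rightarrow> svec \<Rightarrow> svec" where
  "vscale p c y = ((\<lambda>j. (c * fst y j) mod p), (\<lambda>j. (c * snd y j) mod p))"

definition is_code :: "nat \<Rightarrow> nat \<Rightarrow> svec set \<Rightarrow> bool" where
  "is_code n p C \<longleftrightarrow> C \<subseteq> Fvec {1..n} p \<and> ((\<lambda>_. 0), (\<lambda>_. 0)) \<in> C
     \<and> (\<forall>y\<in>C. \<forall>z\<in>C. vadd p y z \<in> C) \<and> (\<forall>c<p. \<forall>y\<in>C. vscale p c y \<in> C)"

definition symp_orth :: "nat \<Rightarrow> nat \<Rightarrow> svec \<Rightarrow> svec \<Rightarrow> bool" where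
  "symp_orth n p y z \<longleftrightarrow>
     (\<Sum>j\<in>{1..n}. fst y j * snd z j) mod p = (\<Sum>j\<in>{1..n}. snd y j * fst z j) mod p"

definition symp_dual :: "nat \<Rightarrow> nat \<Rightarrow> svec set \<Rightarrow> svec set" where
  "symp_dual n p C = {z \<in> Fvec {1..n} p. \<forall>y\<in>C. symp_orth n p y z}"

definition restrict_to :: "(nat \<Rightarrow> nat) \<Rightarrow> nat set \<Rightarrow> nat \<Rightarrow> nat" where
  "restrict_to x R = (\<lambda>j. if j \<in> R then x j else 0)"

definition proj :: "nat set \<Rightarrow> svec \<Rightarrow> svec" where
  "proj R y = (restrict_to (fst y) R, restrict_to (snd y) R)"

definition puncture :: "nat set \<Rightarrow> svec set \<Rightarrow> svec set" where
  "puncture R D = proj R ` D"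

definition supp :: "svec \<Rightarrow> nat set" where
  "supp y = {j. fst y j \<noteq> 0} \<union> {j. snd y j \<noteq> 0}"

definition shorten :: "nat set \<Rightarrow> svec set \<Rightarrow> svec set" where
  "shorten R D = proj R ` {y \<in> D. supp y \<subseteq> R}"

text \<open>Computational basis states of n qudits: functions in basisOn {1..n} p.
  Vectors of C^(p^n): functions on basis states (zero off the basis).
  Operators: matrices indexed by basis states (zero off the basis).\<close>

type_synonym qvec = "(nat \<Rightarrow> nat) \<Rightarrow> complex"
type_synonym qop = "(nat \<Rightarrow> nat) \<Rightarrow> (nat \<Rightarrow> nat) \<Rightarrow> complex"

definition xi :: "nat \<Rightarrow> int \<Rightarrow> complex" where
  "xi p l = cis (2 * pi * of_int l / of_nat p)"

definition opmult :: "(nat \<Rightarrow> nat) set \<Rightarrow> qop \<Rightarrow> qop \<Rightarrow> qop" where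
  "opmult B X Y = (\<lambda>x y. \<Sum>z\<in>B. X x z * Y z y)"

definition opapply :: "(nat \<Rightarrow> nat) set \<Rightarrow> qop \<Rightarrow> qvec \<Rightarrow> qvec" where
  "opapply B X v = (\<lambda>x. \<Sum>z\<in>B. X x z * v z)"

definition adj :: "qop \<Rightarrow> qop" where
  "adj X = (\<lambda>x y. cnj (X y x))"

definition idop :: "(nat \<Rightarrow> nat) set \<Rightarrow> qop" where
  "idop B = (\<lambda>x y. if x \<in> B \<and> x = y then 1 else 0)"

definition scaleop :: "complex \<Rightarrow> qop \<Rightarrow> qop" where
  "scaleop c X = (\<lambda>x y. c * X x y)"

definition opsum :: "nat \<Rightarrow> (nat \<Rightarrow> qop) \<Rightarrow> qop" where
  "opsum m F = (\<lambda>x y. \<Sum>k<m. F k x y)"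

definition outer :: "qvec \<Rightarrow> qop" where
  "outer v = (\<lambda>x y. v x * cnj (v y))"

text \<open>The Pauli operator E_(a,b) = tensor_j X(a_j) Z(b_j) on n qudits:
  E_(a,b) |x> = xi^(b.x) |x + a>.\<close>
definition pauliE :: "nat \<Rightarrow> nat \<Rightarrow> svec \<Rightarrow> qop" where
  "pauliE n p y = (\<lambda>u x.
     if u \<in> basisOn {1..n} p \<and> x \<in> basisOn {1..n} p \<and>
        (\<forall>j\<in>{1..n}. u j = (x j + fst y j) mod p)
     then xi p (int (\<Sum>j\<in>{1..n}. snd y j * x j)) else 0)"

text \<open>The stabilizer group S: generated (under multiplication) by the scalars xi^l I and
  the E_y, y in C. (All generators have finite order, so closure under products already
  yields the generated group.)\<close>
inductive_set stabGroup :: "nat \<Rightarrow> nat \<Rightarrow> svec set \<Rightarrow> qop set"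
  for n p C where
  scal: "scaleop (xi p l) (idop (basisOn {1..n} p)) \<in> stabGroup n p C"
| gen: "y \<in> C \<Longrightarrow> pauliE n p y \<in> stabGroup n p C"
| mult: "X \<in> stabGroup n p C \<Longrightarrow> Y \<in> stabGroup n p C \<Longrightarrow>
         opmult (basisOn {1..n} p) X Y \<in> stabGroup n p C"

definition is_stab_character :: "nat \<Rightarrow> nat \<Rightarrow> svec set \<Rightarrow> (qop \<Rightarrow> complex) \<Rightarrow> bool" where
  "is_stab_character n p C lam \<longleftrightarrow>
     (\<forall>X\<in>stabGroup n p C. \<forall>Y\<in>stabGroup n p C.
        lam (opmult (basisOn {1..n} p) X Y) = lam X * lam Y)
     \<and> lam (scaleop (xi p 1) (idop (basisOn {1..n} p))) = xi p 1"

definition stabQ :: "nat \<Rightarrow> nat \<Rightarrow> svec set \<Rightarrow> (qop \<Rightarrow> complex) \<Rightarrow> qvec set" where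
  "stabQ n p C lam = {v. (\<forall>x. x \<notin> basisOn {1..n} p \<longrightarrow> v x = 0) \<and>
     (\<forall>X\<in>stabGroup n p C. \<forall>x\<in>basisOn {1..n} p.
        opapply (basisOn {1..n} p) X v x = lam X * v x)}"

text \<open>Gamma^I: the completely depolarizing channel on each qudit in I, identity elsewhere;
  the tensor product of the single-qudit maps is
  p^(-2|I|) * sum over (a|b) supported on I of E_(a,b) rho E_(a,b)^dagger.\<close>
definition GammaI :: "nat \<Rightarrow> nat \<Rightarrow> nat set \<Rightarrow> qop \<Rightarrow> qop" where
  "GammaI n p I rho = (\<lambda>x y. (1 / of_nat p ^ (2 * card I)) *
     (\<Sum>e\<in>Fvec I p. opmult (basisOn {1..n} p)
         (opmult (basisOn {1..n} p) (pauliE n p e) rho) (adj (pauliE n p e)) x y))"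

text \<open>B tensor identity: B acts on the qudits indexed by J (B is a matrix indexed by
  basisOn J p), identity on the qudits in {1..n} - J.\<close>
definition tensJ :: "nat \<Rightarrow> nat \<Rightarrow> nat set \<Rightarrow> qop \<Rightarrow> qop" where
  "tensJ n p J Bop = (\<lambda>x y.
     if x \<in> basisOn {1..n} p \<and> y \<in> basisOn {1..n} p \<and>
        restrict_to x ({1..n} - J) = restrict_to y ({1..n} - J)
     then Bop (restrict_to x J) (restrict_to y J) else 0)"

text \<open>A trace-preserving quantum operation on the J-register, in operator-sum (Kraus) form:
  Kraus operators B_0..B_(m-1) on basisOn J p with sum B_k^dagger B_k = I.\<close>
definition kraus_TP :: "nat \<Rightarrow> nat set \<Rightarrow> nat \<Rightarrow> (nat \<Rightarrow> qop) \<Rightarrow> bool" where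
  "kraus_TP p J m Bk \<longleftrightarrow>
     (\<forall>x\<in>basisOn J p. \<forall>y\<in>basisOn J p.
        opsum m (\<lambda>k. opmult (basisOn J p) (adj (Bk k)) (Bk k)) x y = idop (basisOn J p) x y)"

definition applyR :: "nat \<Rightarrow> nat \<Rightarrow> nat set \<Rightarrow> nat \<Rightarrow> (nat \<Rightarrow> qop) \<Rightarrow> qop \<Rightarrow> qop" where
  "applyR n p J m Bk rho = opsum m (\<lambda>k.
     opmult (basisOn {1..n} p) (opmult (basisOn {1..n} p) (tensJ n p J (Bk k)) rho)
       (adj (tensJ n p J (Bk k))))"

definition locally_recoverable :: "nat \<Rightarrow> nat \<Rightarrow> nat set \<Rightarrow> nat set \<Rightarrow> qvec set \<Rightarrow> bool" where
  "locally_recoverable n p I J Q \<longleftrightarrow>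
     (\<exists>m Bk. kraus_TP p J m Bk \<and>
        (\<forall>\<phi>\<in>Q. \<forall>x\<in>basisOn {1..n} p. \<forall>y\<in>basisOn {1..n} p.
           applyR n p J m Bk (GammaI n p I (outer \<phi>)) x y = outer \<phi> x y))"

end

theory Submission
  imports Defs "HOL-Number_Theory.Cong"
begin


abbreviation BB :: "nat \<Rightarrow> nat \<Rightarrow> (nat \<Rightarrow> nat) set" where "BB n p \<equiv> basisOn {1..n} p"

lemma xi_add: "xi p a * xi p b = xi p (a + b)"
  unfolding xi_def by (simp add: cis_mult add_divide_distrib distrib_left)

lemma xi_ne0: "xi p a \<noteq> 0"
  unfolding xi_def by simp

lemma xi_0[simp]: "xi p 0 = 1"
  unfolding xi_def by simp

lemma xi_cong:
  assumes "p > 0" "a mod int p = b mod int p"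
  shows "xi p a = xi p b"
proof -
  have "int p dvd a - b" using assms(2) by (simp add: mod_eq_dvd_iff)
  then obtain k where "a - b = int p * k" by (elim dvdE)
  then have k: "a = b + int p * k" by simp
  have "2 * pi * real_of_int a / real p = 2 * pi * real_of_int b / real p + 2 * pi * real_of_int k"
    using assms(1) by (simp add: k field_simps)
  then have "xi p a = cis (2 * pi * real_of_int b / real p + 2 * pi * real_of_int k)"
    unfolding xi_def by simp
  also have "\<dots> = cis (2 * pi * real_of_int b / real p) * cis (2 * pi * real_of_int k)"
    by (rule cis_mult[symmetric])
  also have "cis (2 * pi * real_of_int k) = 1" by simp
  finally show ?thesis by (simp add: xi_def)
qed

lemma xi_nat_cong:
  assumes "p > 0" "a mod p = b mod p"
  shows "xi p (int a) = xi p (int b)"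
  apply (rule xi_cong[OF assms(1)])
  using assms(2) by (metis of_nat_mod)

lemma xi_neq1:
  assumes "0 < b" "b < p"
  shows "xi p (int b) \<noteq> 1"
proof
  assume "xi p (int b) = 1"
  then have "cos (2 * pi * real b / real p) = 1"
    unfolding xi_def by (simp add: complex_eq_iff)
  then obtain m :: int where m: "2 * pi * real b / real p = real_of_int m * 2 * pi"
    by (subst (asm) cos_one_2pi_int) blast
  then have "real b = real_of_int m * real p" using assms by (simp add: field_simps)
  then have "int b = m * int p" by (metis of_int_eq_iff of_int_mult of_int_of_nat_eq)
  have "m > 0"
  proof (rule ccontr)
    assume "\<not> m > 0"
    then have "m * int p \<le> 0" by (simp add: mult_nonpos_nonneg)
    then show False using \<open>int b = m * int p\<close> assms by simp
  qed
  then have "1 * int p \<le> m * int p" by (intro mult_right_mono) simp_all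
  then show False using \<open>int b = m * int p\<close> assms by linarith
qed

lemma finite_basisOn: "finite S \<Longrightarrow> finite (basisOn S p)"
proof -
  assume "finite S"
  have "basisOn S p = {f. \<forall>x. (x \<in> S \<longrightarrow> f x \<in> {..<p}) \<and> (x \<notin> S \<longrightarrow> f x = 0)}"
    unfolding basisOn_def by auto
  then show ?thesis using finite_set_of_finite_funs[OF \<open>finite S\<close>, of "{..<p}" 0] by simp
qed

definition sh :: "nat \<Rightarrow> nat \<Rightarrow> (nat \<Rightarrow> nat) \<Rightarrow> (nat \<Rightarrow> nat) \<Rightarrow> (nat \<Rightarrow> nat)" where
  "sh n p a x = (\<lambda>j. if j \<in> {1..n} then (x j + a j) mod p else 0)"

lemma sh_in: "p > 0 \<Longrightarrow> sh n p a x \<in> BB n p"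
  unfolding sh_def basisOn_def by auto

lemma pauliE_alt:
  assumes "p > 0"
  shows "pauliE n p y u x = (if x \<in> BB n p \<and> u = sh n p (fst y) x
           then xi p (int (\<Sum>j\<in>{1..n}. snd y j * x j)) else 0)"
proof -
  have "(u \<in> BB n p \<and> (\<forall>j\<in>{1..n}. u j = (x j + fst y j) mod p)) \<longleftrightarrow> u = sh n p (fst y) x"
  proof
    assume h: "u \<in> BB n p \<and> (\<forall>j\<in>{1..n}. u j = (x j + fst y j) mod p)"
    show "u = sh n p (fst y) x"
    proof
      fix j show "u j = sh n p (fst y) x j" using h unfolding sh_def basisOn_def by auto
    qed
  next
    assume "u = sh n p (fst y) x"
    then show "u \<in> BB n p \<and> (\<forall>j\<in>{1..n}. u j = (x j + fst y j) mod p)"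
      using sh_in[OF assms] unfolding sh_def by auto
  qed
  then show ?thesis unfolding pauliE_def by auto
qed

lemma phase_lemma:
  assumes "p > 0"
  shows "xi p (int (\<Sum>j\<in>{1..n}. b1 j * ((x j + a2 j) mod p))) * xi p (int (\<Sum>j\<in>{1..n}. b2 j * x j))
       = xi p (int (\<Sum>j\<in>{1..n}. b1 j * a2 j)) * xi p (int (\<Sum>j\<in>{1..n}. ((b1 j + b2 j) mod p) * x j))"
proof -
  have c: "[b1 j * ((x j + a2 j) mod p) + b2 j * x j = b1 j * a2 j + ((b1 j + b2 j) mod p) * x j] (mod p)" for j
  proof -
    have "[b1 j * ((x j + a2 j) mod p) + b2 j * x j = b1 j * (x j + a2 j) + b2 j * x j] (mod p)"
      by (intro cong_add cong_mult cong_refl) (simp add: cong_def)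
    moreover have "b1 j * (x j + a2 j) + b2 j * x j = b1 j * a2 j + (b1 j + b2 j) * x j"
      by (simp add: algebra_simps)
    moreover have "[b1 j * a2 j + (b1 j + b2 j) * x j = b1 j * a2 j + ((b1 j + b2 j) mod p) * x j] (mod p)"
      by (intro cong_add cong_mult cong_refl) (simp add: cong_def)
    ultimately show ?thesis by (metis cong_trans)
  qed
  have e: "(\<Sum>j\<in>{1..n}. b1 j * ((x j + a2 j) mod p) + b2 j * x j) mod p
         = (\<Sum>j\<in>{1..n}. b1 j * a2 j + ((b1 j + b2 j) mod p) * x j) mod p"
    using cong_sum[of "{1..n}", OF c] unfolding cong_def .
  have l: "xi p (int (\<Sum>j\<in>{1..n}. b1 j * ((x j + a2 j) mod p))) * xi p (int (\<Sum>j\<in>{1..n}. b2 j * x j))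
     = xi p (int (\<Sum>j\<in>{1..n}. b1 j * ((x j + a2 j) mod p) + b2 j * x j))"
    by (simp add: xi_add sum.distrib)
  have r: "xi p (int (\<Sum>j\<in>{1..n}. b1 j * a2 j)) * xi p (int (\<Sum>j\<in>{1..n}. ((b1 j + b2 j) mod p) * x j))
     = xi p (int (\<Sum>j\<in>{1..n}. b1 j * a2 j + ((b1 j + b2 j) mod p) * x j))"
    by (simp add: xi_add sum.distrib)
  show ?thesis unfolding l r using xi_nat_cong[OF assms e] .
qed



definition dotp :: "nat \<Rightarrow> (nat \<Rightarrow> nat) \<Rightarrow> (nat \<Rightarrow> nat) \<Rightarrow> nat" where
  "dotp n b x = (\<Sum>j\<in>{1..n}. b j * x j)"

lemma pauliE_alt2:
  assumes "p > 0"
  shows "pauliE n p y u x = (if x \<in> BB n p \<and> u = sh n p (fst y) x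
           then xi p (int (dotp n (snd y) x)) else 0)"
  unfolding dotp_def by (rule pauliE_alt[OF assms])

lemma phase_lemma2:
  assumes "p > 0"
  shows "xi p (int (dotp n b1 (\<lambda>j. (x j + a2 j) mod p))) * xi p (int (dotp n b2 x))
       = xi p (int (dotp n b1 a2)) * xi p (int (dotp n (\<lambda>j. (b1 j + b2 j) mod p) x))"
  unfolding dotp_def by (rule phase_lemma[OF assms])

lemma vadd_Fvec: "p > 0 \<Longrightarrow> y \<in> Fvec S p \<Longrightarrow> z \<in> Fvec S p \<Longrightarrow> vadd p y z \<in> Fvec S p"
  unfolding Fvec_def basisOn_def vadd_def by auto

lemma vscale_Fvec: "p > 0 \<Longrightarrow> y \<in> Fvec S p \<Longrightarrow> vscale p c y \<in> Fvec S p"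
  unfolding Fvec_def basisOn_def vscale_def by auto

lemma pauliE_offB1: "u \<notin> BB n p \<Longrightarrow> pauliE n p y u x = 0"
  unfolding pauliE_def by auto

lemma pauliE_offB2: "x \<notin> BB n p \<Longrightarrow> pauliE n p y u x = 0"
  unfolding pauliE_def by auto

lemma finite_BB: "finite (BB n p)"
  by (rule finite_basisOn) simp

lemma opapply_opmult:
  assumes "finite B"
  shows "opapply B (opmult B X Y) v = opapply B X (opapply B Y v)"
proof
  fix x
  have "opapply B (opmult B X Y) v x = (\<Sum>z\<in>B. \<Sum>t\<in>B. X x t * Y t z * v z)"
    unfolding opapply_def opmult_def by (simp add: sum_distrib_right)
  also have "\<dots> = (\<Sum>t\<in>B. \<Sum>z\<in>B. X x t * Y t z * v z)" by (rule sum.swap)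
  also have "\<dots> = opapply B X (opapply B Y v) x"
    unfolding opapply_def by (simp add: sum_distrib_left mult.assoc)
  finally show "opapply B (opmult B X Y) v x = opapply B X (opapply B Y v) x" .
qed

lemma opapply_cong: "(\<And>x. x \<in> B \<Longrightarrow> v x = w x) \<Longrightarrow> opapply B X v = opapply B X w"
  unfolding opapply_def by (intro ext sum.cong) auto

lemma opapply_scale: "opapply B X (\<lambda>x. c * v x) = (\<lambda>x. c * opapply B X v x)"
  unfolding opapply_def by (simp add: sum_distrib_left mult.left_commute)

lemma opapply_add: "opapply B X (\<lambda>x. v x + w x) = (\<lambda>x. opapply B X v x + opapply B X w x)"
  unfolding opapply_def by (simp add: distrib_left sum.distrib)

lemma opapply_scaleop_id: "finite B \<Longrightarrow> opapply B (scaleop c (idop B)) v x = (if x \<in> B then c * v x else 0)"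
proof (cases "x \<in> B")
  case True
  assume f: "finite B"
  have "opapply B (scaleop c (idop B)) v x = (\<Sum>z\<in>B. if z = x then c * v x else 0)"
    unfolding opapply_def scaleop_def idop_def by (rule sum.cong) (auto simp: True)
  also have "\<dots> = c * v x" using f True by simp
  finally show ?thesis using True by simp
next
  case False
  then show ?thesis unfolding opapply_def scaleop_def idop_def by simp
qed

lemma pauliE_zero: "pauliE n p ((\<lambda>_. 0), (\<lambda>_. 0)) = idop (BB n p)"
proof (intro ext)
  fix u x
  have "(u \<in> BB n p \<and> x \<in> BB n p \<and> (\<forall>j\<in>{1..n}. u j = (x j + 0) mod p)) \<longleftrightarrow> (u \<in> BB n p \<and> u = x)"
  proof
    assume h: "u \<in> BB n p \<and> x \<in> BB n p \<and> (\<forall>j\<in>{1..n}. u j = (x j + 0) mod p)"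
    have "u j = x j" for j
    proof (cases "j \<in> {1..n}")
      case True
      then show ?thesis using h unfolding basisOn_def by simp
    next
      case False
      then show ?thesis using h unfolding basisOn_def by simp
    qed
    then show "u \<in> BB n p \<and> u = x" using h by auto
  next
    assume "u \<in> BB n p \<and> u = x"
    then show "u \<in> BB n p \<and> x \<in> BB n p \<and> (\<forall>j\<in>{1..n}. u j = (x j + 0) mod p)"
      unfolding basisOn_def by auto
  qed
  then show "pauliE n p ((\<lambda>_. 0), (\<lambda>_. 0)) u x = idop (BB n p) u x"
    unfolding pauliE_def idop_def by auto
qed

lemma pauli_mult:
  assumes p: "p > 0" and y1: "y1 \<in> Fvec {1..n} p" and y2: "y2 \<in> Fvec {1..n} p"
  shows "opmult (BB n p) (pauliE n p y1) (pauliE n p y2)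
       = scaleop (xi p (int (dotp n (snd y1) (fst y2)))) (pauliE n p (vadd p y1 y2))"
proof (intro ext)
  fix u x
  show "opmult (BB n p) (pauliE n p y1) (pauliE n p y2) u x
      = scaleop (xi p (int (dotp n (snd y1) (fst y2)))) (pauliE n p (vadd p y1 y2)) u x"
  proof (cases "x \<in> BB n p")
    case False
    then show ?thesis by (simp add: opmult_def scaleop_def pauliE_offB2)
  next
    case True
    define t where "t = sh n p (fst y2) x"
    define c where "c = xi p (int (dotp n (snd y2) x))"
    have t: "t \<in> BB n p" using sh_in[OF p] t_def by simp
    have "opmult (BB n p) (pauliE n p y1) (pauliE n p y2) u x
        = (\<Sum>s\<in>BB n p. if s = t then pauliE n p y1 u t * c else 0)"
      unfolding opmult_def using True by (intro sum.cong) (simp_all add: pauliE_alt2[OF p, of _ y2] t_def c_def)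
    also have "\<dots> = pauliE n p y1 u t * c" using t finite_BB by simp
    finally have L: "opmult (BB n p) (pauliE n p y1) (pauliE n p y2) u x = pauliE n p y1 u t * c" .
    have shc: "sh n p (fst y1) t = sh n p (fst (vadd p y1 y2)) x"
    proof
      fix j
      have "((x j + fst y2 j) mod p + fst y1 j) mod p = (x j + fst y2 j + fst y1 j) mod p"
        by (rule mod_add_left_eq)
      moreover have "(x j + (fst y1 j + fst y2 j) mod p) mod p = (x j + (fst y1 j + fst y2 j)) mod p"
        by (rule mod_add_right_eq)
      ultimately show "sh n p (fst y1) t j = sh n p (fst (vadd p y1 y2)) x j"
        unfolding t_def sh_def vadd_def by (simp add: add.commute add.left_commute)
    qed
    have s1: "dotp n (snd y1) t = dotp n (snd y1) (\<lambda>j. (x j + fst y2 j) mod p)"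
      unfolding t_def sh_def dotp_def by (intro sum.cong) auto
    have s2: "snd (vadd p y1 y2) = (\<lambda>j. (snd y1 j + snd y2 j) mod p)"
      unfolding vadd_def by simp
    show ?thesis
      unfolding L using t True
      by (simp add: pauliE_alt2[OF p] scaleop_def shc s1 s2 c_def phase_lemma2[OF p])
  qed
qed

lemma vadd_neg:
  assumes p: "p > 0" and y: "y \<in> Fvec {1..n} p"
  shows "vadd p (vscale p (p - 1) y) y = ((\<lambda>_. 0), (\<lambda>_. 0))"
proof -
  have h: "((p - Suc 0) * a mod p + a) mod p = 0" for a :: nat
  proof -
    have "((p - Suc 0) * a mod p + a) mod p = ((p - Suc 0) * a + a) mod p" by (simp add: mod_simps)
    also have "(p - Suc 0) * a + a = p * a" using p by (simp add: algebra_simps)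
    finally show ?thesis by simp
  qed
  show ?thesis unfolding vadd_def vscale_def by (simp add: h)
qed

lemma pauli_inv:
  assumes p: "p > 0" and y: "y \<in> Fvec {1..n} p"
  shows "\<exists>w. w \<noteq> 0 \<and> (\<forall>v x. opapply (BB n p) (pauliE n p (vscale p (p - 1) y)) (opapply (BB n p) (pauliE n p y) v) x
            = (if x \<in> BB n p then w * v x else 0))"
proof -
  have y': "vscale p (p - 1) y \<in> Fvec {1..n} p" using vscale_Fvec[OF p y] .
  let ?w = "xi p (int (dotp n (snd (vscale p (p - 1) y)) (fst y)))"
  have "opapply (BB n p) (pauliE n p (vscale p (p - 1) y)) (opapply (BB n p) (pauliE n p y) v) x
      = (if x \<in> BB n p then ?w * v x else 0)" for v x
    unfolding opapply_opmult[OF finite_BB, symmetric] pauli_mult[OF p y' y] vadd_neg[OF p y] pauliE_zero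
    using opapply_scaleop_id[OF finite_BB] by simp
  then show ?thesis using xi_ne0 by blast
qed

lemma pauli_inj:
  assumes p: "p > 0" and y: "y \<in> Fvec {1..n} p"
    and h: "\<forall>x\<in>BB n p. opapply (BB n p) (pauliE n p y) v x = 0"
  shows "\<forall>x\<in>BB n p. v x = 0"
proof -
  obtain w where w: "w \<noteq> 0" and e: "\<And>v x. opapply (BB n p) (pauliE n p (vscale p (p - 1) y)) (opapply (BB n p) (pauliE n p y) v) x
            = (if x \<in> BB n p then w * v x else 0)" using pauli_inv[OF p y] by blast
  have "opapply (BB n p) (pauliE n p y) v = opapply (BB n p) (pauliE n p y) v" ..
  have z: "opapply (BB n p) (pauliE n p (vscale p (p - 1) y)) (opapply (BB n p) (pauliE n p y) v)
       = opapply (BB n p) (pauliE n p (vscale p (p - 1) y)) (\<lambda>_. 0)"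
    by (rule opapply_cong) (use h in auto)
  show ?thesis
  proof
    fix x assume x: "x \<in> BB n p"
    have "w * v x = opapply (BB n p) (pauliE n p (vscale p (p - 1) y)) (opapply (BB n p) (pauliE n p y) v) x"
      using e[of v x] x by simp
    also have "\<dots> = opapply (BB n p) (pauliE n p (vscale p (p - 1) y)) (\<lambda>_. 0) x" using z by simp
    also have "\<dots> = 0" by (simp add: opapply_def)
    finally have "w * v x = 0" .
    then show "v x = 0" using w by simp
  qed
qed



lemma scal_mult_qop:
  "opmult (BB n p) (scaleop a (idop (BB n p))) (scaleop b (idop (BB n p))) = scaleop (a * b) (idop (BB n p))"
proof (intro ext)
  fix u x
  have "opmult (BB n p) (scaleop a (idop (BB n p))) (scaleop b (idop (BB n p))) u x
      = (\<Sum>t\<in>BB n p. if t = u then (if u \<in> BB n p \<and> u = x then a * b else 0) else 0)"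
    unfolding opmult_def scaleop_def idop_def by (rule sum.cong) auto
  also have "\<dots> = scaleop (a * b) (idop (BB n p)) u x"
    using finite_BB by (simp add: scaleop_def idop_def)
  finally show "opmult (BB n p) (scaleop a (idop (BB n p))) (scaleop b (idop (BB n p))) u x = scaleop (a * b) (idop (BB n p)) u x" .
qed

lemma scal_mult_pauli:
  "opmult (BB n p) (scaleop a (idop (BB n p))) (pauliE n p y) = scaleop a (pauliE n p y)"
proof (intro ext)
  fix u x
  have "opmult (BB n p) (scaleop a (idop (BB n p))) (pauliE n p y) u x
      = (\<Sum>t\<in>BB n p. if t = u then (if u \<in> BB n p then a * pauliE n p y u x else 0) else 0)"
    unfolding opmult_def scaleop_def idop_def by (rule sum.cong) auto
  also have "\<dots> = scaleop a (pauliE n p y) u x"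
    using finite_BB by (simp add: scaleop_def pauliE_offB1)
  finally show "opmult (BB n p) (scaleop a (idop (BB n p))) (pauliE n p y) u x = scaleop a (pauliE n p y) u x" .
qed

lemma scaleop_one: "scaleop 1 X = X"
  unfolding scaleop_def by simp

locale stabctx =
  fixes n p :: nat and C :: "svec set" and lam :: "qop \<Rightarrow> complex"
  assumes p: "p > 0"
    and code: "is_code n p C"
    and chr: "is_stab_character n p C lam"
begin

lemma lam_mult: "X \<in> stabGroup n p C \<Longrightarrow> Y \<in> stabGroup n p C \<Longrightarrow>
   lam (opmult (BB n p) X Y) = lam X * lam Y"
  using chr unfolding is_stab_character_def by blast

lemma lam_xi1: "lam (scaleop (xi p 1) (idop (BB n p))) = xi p 1"
  using chr unfolding is_stab_character_def by blast

lemma lam_scal_nat: "lam (scaleop (xi p (int k)) (idop (BB n p))) = xi p (int k)"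
proof -
  have mem: "scaleop (xi p l) (idop (BB n p)) \<in> stabGroup n p C" for l
    by (rule stabGroup.scal)
  have step: "lam (scaleop (xi p (int (Suc k))) (idop (BB n p)))
      = xi p 1 * lam (scaleop (xi p (int k)) (idop (BB n p)))" for k
  proof -
    have "scaleop (xi p (int (Suc k))) (idop (BB n p))
        = opmult (BB n p) (scaleop (xi p 1) (idop (BB n p))) (scaleop (xi p (int k)) (idop (BB n p)))"
      unfolding scal_mult_qop xi_add by (simp add: add.commute)
    then show ?thesis using lam_mult[OF mem mem] lam_xi1 by simp
  qed
  have l0: "lam (scaleop (xi p 0) (idop (BB n p))) = 1"
  proof -
    have "xi p 1 = xi p 1 * lam (scaleop (xi p 0) (idop (BB n p)))"
      using step[of 0] lam_xi1 by simp
    then show ?thesis using xi_ne0[of p 1] by simp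
  qed
  show ?thesis
  proof (induction k)
    case 0 then show ?case using l0 by simp
  next
    case (Suc k)
    then show ?case using step[of k] by (simp add: xi_add add.commute)
  qed
qed

lemma lam_scal: "lam (scaleop (xi p l) (idop (BB n p))) = xi p l"
proof -
  have e: "xi p l = xi p (int (nat (l mod int p)))"
    by (rule xi_cong[OF p]) (simp add: p)
  show ?thesis unfolding e by (rule lam_scal_nat)
qed

lemma C_sub: "C \<subseteq> Fvec {1..n} p"
  using code unfolding is_code_def by blast

lemma C_vadd: "y \<in> C \<Longrightarrow> z \<in> C \<Longrightarrow> vadd p y z \<in> C"
  using code unfolding is_code_def by blast

lemma C_vscale: "c < p \<Longrightarrow> y \<in> C \<Longrightarrow> vscale p c y \<in> C"
  using code unfolding is_code_def by blast

lemma C_zero: "((\<lambda>_. 0), (\<lambda>_. 0)) \<in> C"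
  using code unfolding is_code_def by blast

lemma finite_C: "finite C"
proof -
  have "finite (Fvec {1..n} p)" unfolding Fvec_def using finite_BB by simp
  then show ?thesis using C_sub finite_subset by blast
qed

lemma lam_E0: "lam (pauliE n p ((\<lambda>_. 0), (\<lambda>_. 0))) = 1"
proof -
  have "pauliE n p ((\<lambda>_. 0), (\<lambda>_. 0)) = scaleop (xi p 0) (idop (BB n p))"
    unfolding pauliE_zero by (simp add: scaleop_one)
  then show ?thesis using lam_scal[of 0] by simp
qed

lemma lam_pauli_mult:
  assumes "c \<in> C" "d \<in> C"
  shows "lam (pauliE n p c) * lam (pauliE n p d) = xi p (int (dotp n (snd c) (fst d))) * lam (pauliE n p (vadd p c d))"
proof -
  have cF: "c \<in> Fvec {1..n} p" and dF: "d \<in> Fvec {1..n} p" using assms C_sub by auto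
  have "lam (pauliE n p c) * lam (pauliE n p d) = lam (opmult (BB n p) (pauliE n p c) (pauliE n p d))"
    using lam_mult[OF stabGroup.gen stabGroup.gen, OF assms] by simp
  also have "opmult (BB n p) (pauliE n p c) (pauliE n p d)
      = opmult (BB n p) (scaleop (xi p (int (dotp n (snd c) (fst d)))) (idop (BB n p))) (pauliE n p (vadd p c d))"
    unfolding pauli_mult[OF p cF dF] scal_mult_pauli ..
  also have "lam \<dots> = xi p (int (dotp n (snd c) (fst d))) * lam (pauliE n p (vadd p c d))"
    using lam_mult[OF stabGroup.scal stabGroup.gen[OF C_vadd[OF assms]]] lam_scal by simp
  finally show ?thesis .
qed

lemma lam_pauli_ne0:
  assumes "c \<in> C"
  shows "lam (pauliE n p c) \<noteq> 0"
proof
  assume h: "lam (pauliE n p c) = 0"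
  have c': "vscale p (p - 1) c \<in> C" using C_vscale[OF _ assms] p by simp
  have cF: "c \<in> Fvec {1..n} p" using assms C_sub by auto
  have "lam (pauliE n p (vscale p (p - 1) c)) * lam (pauliE n p c)
     = xi p (int (dotp n (snd (vscale p (p - 1) c)) (fst c))) * lam (pauliE n p (vadd p (vscale p (p - 1) c) c))"
    by (rule lam_pauli_mult[OF c' assms])
  also have "\<dots> = xi p (int (dotp n (snd (vscale p (p - 1) c)) (fst c)))"
    unfolding vadd_neg[OF p cF] lam_E0 by simp
  finally show False using h xi_ne0 by simp
qed

lemma stabQ_zero_off: "v \<in> stabQ n p C lam \<Longrightarrow> x \<notin> BB n p \<Longrightarrow> v x = 0"
  unfolding stabQ_def by blast

lemma stabQ_eig: "v \<in> stabQ n p C lam \<Longrightarrow> X \<in> stabGroup n p C \<Longrightarrow> x \<in> BB n p \<Longrightarrow>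
   opapply (BB n p) X v x = lam X * v x"
  unfolding stabQ_def by blast

lemma stabQ_add: "v \<in> stabQ n p C lam \<Longrightarrow> w \<in> stabQ n p C lam \<Longrightarrow> (\<lambda>x. v x + w x) \<in> stabQ n p C lam"
  unfolding stabQ_def by (simp add: opapply_add distrib_left)

lemma stabQ_scale: "v \<in> stabQ n p C lam \<Longrightarrow> (\<lambda>x. a * v x) \<in> stabQ n p C lam"
  unfolding stabQ_def by (simp add: opapply_scale mult.left_commute)

lemma pauli_commute_dual:
  assumes c: "c \<in> C" and y: "y \<in> symp_dual n p C"
  shows "opmult (BB n p) (pauliE n p c) (pauliE n p y) = opmult (BB n p) (pauliE n p y) (pauliE n p c)"
proof -
  have cF: "c \<in> Fvec {1..n} p" using c C_sub by auto
  have yF: "y \<in> Fvec {1..n} p" and orth: "symp_orth n p c y" using y c unfolding symp_dual_def by auto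
  have va: "vadd p c y = vadd p y c" unfolding vadd_def by (simp add: add.commute)
  have "dotp n (snd c) (fst y) mod p = dotp n (snd y) (fst c) mod p"
    using orth unfolding symp_orth_def dotp_def by (simp add: mult.commute)
  then have ph: "xi p (int (dotp n (snd c) (fst y))) = xi p (int (dotp n (snd y) (fst c)))"
    by (rule xi_nat_cong[OF p])
  show ?thesis unfolding pauli_mult[OF p cF yF] pauli_mult[OF p yF cF] va ph ..
qed

lemma dual_commute_all:
  assumes y: "y \<in> symp_dual n p C" and X: "X \<in> stabGroup n p C"
  shows "\<forall>v. opapply (BB n p) X (opapply (BB n p) (pauliE n p y) v)
           = opapply (BB n p) (pauliE n p y) (opapply (BB n p) X v)"
  using X
proof (induction rule: stabGroup.induct)
  case (scal l)
  show ?case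
  proof
    fix v
    show "opapply (BB n p) (scaleop (xi p l) (idop (BB n p))) (opapply (BB n p) (pauliE n p y) v) =
          opapply (BB n p) (pauliE n p y) (opapply (BB n p) (scaleop (xi p l) (idop (BB n p))) v)"
    proof
      fix x
      have "opapply (BB n p) (pauliE n p y) (opapply (BB n p) (scaleop (xi p l) (idop (BB n p))) v)
          = opapply (BB n p) (pauliE n p y) (\<lambda>t. xi p l * v t)"
        by (rule opapply_cong) (simp add: opapply_scaleop_id finite_basisOn)
      also have "\<dots> = (\<lambda>t. xi p l * opapply (BB n p) (pauliE n p y) v t)" by (rule opapply_scale)
      finally have R: "opapply (BB n p) (pauliE n p y) (opapply (BB n p) (scaleop (xi p l) (idop (BB n p))) v) x
          = xi p l * opapply (BB n p) (pauliE n p y) v x" by simp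
      have L: "opapply (BB n p) (scaleop (xi p l) (idop (BB n p))) (opapply (BB n p) (pauliE n p y) v) x
          = xi p l * opapply (BB n p) (pauliE n p y) v x"
      proof (cases "x \<in> BB n p")
        case True
        then show ?thesis using opapply_scaleop_id[OF finite_BB] by simp
      next
        case False
        then have "opapply (BB n p) (pauliE n p y) v x = 0" by (simp add: opapply_def pauliE_offB1)
        then show ?thesis using False opapply_scaleop_id[OF finite_BB] by simp
      qed
      show "opapply (BB n p) (scaleop (xi p l) (idop (BB n p))) (opapply (BB n p) (pauliE n p y) v) x =
          opapply (BB n p) (pauliE n p y) (opapply (BB n p) (scaleop (xi p l) (idop (BB n p))) v) x"
        unfolding L R ..
    qed
  qed
next
  case (gen c)
  show ?case
    unfolding opapply_opmult[OF finite_BB, symmetric] using pauli_commute_dual[OF gen y] by simp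
next
  case (mult X Y)
  show ?case
  proof
    fix v
    show "opapply (BB n p) (opmult (BB n p) X Y) (opapply (BB n p) (pauliE n p y) v) =
          opapply (BB n p) (pauliE n p y) (opapply (BB n p) (opmult (BB n p) X Y) v)"
      unfolding opapply_opmult[OF finite_BB] using mult.IH by simp
  qed
qed

lemma dual_preserves_Q:
  assumes y: "y \<in> symp_dual n p C" and v: "v \<in> stabQ n p C lam"
  shows "opapply (BB n p) (pauliE n p y) v \<in> stabQ n p C lam"
  unfolding stabQ_def
proof (intro CollectI conjI allI impI ballI)
  fix x assume "x \<notin> BB n p"
  then show "opapply (BB n p) (pauliE n p y) v x = 0" by (simp add: opapply_def pauliE_offB1)
next
  fix X x assume X: "X \<in> stabGroup n p C" and x: "x \<in> BB n p"
  have "opapply (BB n p) X (opapply (BB n p) (pauliE n p y) v) x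
      = opapply (BB n p) (pauliE n p y) (opapply (BB n p) X v) x"
    using dual_commute_all[OF y X] by simp
  also have "opapply (BB n p) (pauliE n p y) (opapply (BB n p) X v) = opapply (BB n p) (pauliE n p y) (\<lambda>t. lam X * v t)"
    by (rule opapply_cong) (rule stabQ_eig[OF v X])
  also have "\<dots> = (\<lambda>t. lam X * opapply (BB n p) (pauliE n p y) v t)" by (rule opapply_scale)
  finally show "opapply (BB n p) X (opapply (BB n p) (pauliE n p y) v) x = lam X * opapply (BB n p) (pauliE n p y) v x" by simp
qed

end



lemma basisOn_out: "a \<in> basisOn R p \<Longrightarrow> j \<notin> R \<Longrightarrow> a j = 0"
  unfolding basisOn_def by blast

lemma basisOn_lt: "a \<in> basisOn R p \<Longrightarrow> j \<in> R \<Longrightarrow> a j < p"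
  unfolding basisOn_def by blast

lemma tensJ_offB2: "x \<notin> BB n p \<Longrightarrow> tensJ n p J Bop u x = 0"
  unfolding tensJ_def by simp

lemma tensJ_offB1: "u \<notin> BB n p \<Longrightarrow> tensJ n p J Bop u x = 0"
  unfolding tensJ_def by simp

lemma tens_commute:
  assumes p: "p > 0" and J: "J \<subseteq> {1..n}" and w: "w \<in> Fvec ({1..n} - J) p"
  shows "opmult (BB n p) (tensJ n p J Bop) (pauliE n p w) = opmult (BB n p) (pauliE n p w) (tensJ n p J Bop)"
proof (intro ext)
  fix u x
  define R where "R = {1..n} - J"
  define a where "a = fst w"
  define b where "b = snd w"
  have aR: "a \<in> basisOn R p" and bR: "b \<in> basisOn R p" using w unfolding Fvec_def R_def a_def b_def by auto
  show "opmult (BB n p) (tensJ n p J Bop) (pauliE n p w) u x = opmult (BB n p) (pauliE n p w) (tensJ n p J Bop) u x"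
  proof (cases "x \<in> BB n p \<and> u \<in> BB n p")
    case False
    then show ?thesis unfolding opmult_def
      by (auto simp: tensJ_offB1 tensJ_offB2 pauliE_offB1 pauliE_offB2 intro!: sum.neutral)
  next
    case True
    then have x: "x \<in> BB n p" and u: "u \<in> BB n p" by auto
    define t0 where "t0 = sh n p a x"
    have t0: "t0 \<in> BB n p" using sh_in[OF p] t0_def by simp
    have "opmult (BB n p) (tensJ n p J Bop) (pauliE n p w) u x
        = (\<Sum>t\<in>BB n p. if t = t0 then tensJ n p J Bop u t0 * xi p (int (dotp n b x)) else 0)"
      unfolding opmult_def by (rule sum.cong) (use x in \<open>auto simp: pauliE_alt2[OF p] t0_def a_def b_def\<close>)
    also have "\<dots> = tensJ n p J Bop u t0 * xi p (int (dotp n b x))" using t0 finite_BB by simp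
    finally have L: "opmult (BB n p) (tensJ n p J Bop) (pauliE n p w) u x = tensJ n p J Bop u t0 * xi p (int (dotp n b x))" .
    define t1 where "t1 = (\<lambda>j. if j \<in> J then u j else x j)"
    have t1: "t1 \<in> BB n p"
      using u x J unfolding t1_def basisOn_def by auto
    have single: "pauliE n p w u t * tensJ n p J Bop t x = 0" if "t \<in> BB n p" "t \<noteq> t1" for t
    proof (rule ccontr)
      assume nz: "pauliE n p w u t * tensJ n p J Bop t x \<noteq> 0"
      then have e1: "u = sh n p a t" using pauliE_alt2[OF p, of n w u t] a_def by (auto split: if_splits)
      from nz have e2: "restrict_to t R = restrict_to x R" unfolding tensJ_def R_def by (auto split: if_splits)
      have "t j = t1 j" for j
      proof (cases "j \<in> J")
        case True
        then have "j \<in> {1..n}" "a j = 0" using J basisOn_out[OF aR] R_def by auto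
        then have "u j = t j mod p" using e1 unfolding sh_def by simp
        also have "\<dots> = t j" using basisOn_lt[OF that(1) \<open>j \<in> {1..n}\<close>] by simp
        finally show ?thesis unfolding t1_def using True by simp
      next
        case False
        show ?thesis
        proof (cases "j \<in> R")
          case True
          then show ?thesis using e2 False fun_cong[OF e2, of j] unfolding t1_def restrict_to_def by simp
        next
          case False2: False
          then have "j \<notin> {1..n}" using False R_def by auto
          then show ?thesis using basisOn_out[OF that(1)] basisOn_out[OF x] False unfolding t1_def by simp
        qed
      qed
      then show False using that(2) by auto
    qed
    have "opmult (BB n p) (pauliE n p w) (tensJ n p J Bop) u x = pauliE n p w u t1 * tensJ n p J Bop t1 x"
      unfolding opmult_def
      by (rule sum.remove[OF finite_BB t1, THEN trans]) (simp add: single sum.neutral)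
    also have "\<dots> = tensJ n p J Bop u t0 * xi p (int (dotp n b x))"
    proof -
      have rJ1: "restrict_to t1 J = restrict_to u J" unfolding restrict_to_def t1_def by auto
      have rJ0: "restrict_to t0 J = restrict_to x J"
      proof
        fix j
        show "restrict_to t0 J j = restrict_to x J j"
        proof (cases "j \<in> J")
          case True
          then have "j \<in> {1..n}" "a j = 0" using J basisOn_out[OF aR] R_def by auto
          then show ?thesis using True basisOn_lt[OF x \<open>j \<in> {1..n}\<close>] unfolding restrict_to_def t0_def sh_def by simp
        qed (simp add: restrict_to_def)
      qed
      have rR1: "restrict_to t1 R = restrict_to x R" unfolding restrict_to_def t1_def R_def by auto
      have cond: "(u = sh n p a t1) \<longleftrightarrow> (restrict_to u R = restrict_to t0 R)"
      proof
        assume h: "u = sh n p a t1"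
        show "restrict_to u R = restrict_to t0 R"
        proof
          fix j show "restrict_to u R j = restrict_to t0 R j"
            using fun_cong[OF h, of j] unfolding restrict_to_def t0_def sh_def t1_def R_def by auto
        qed
      next
        assume h: "restrict_to u R = restrict_to t0 R"
        show "u = sh n p a t1"
        proof
          fix j
          show "u j = sh n p a t1 j"
          proof (cases "j \<in> {1..n}")
            case False
            then show ?thesis using basisOn_out[OF u] unfolding sh_def by auto
          next
            case jn: True
            show ?thesis
            proof (cases "j \<in> J")
              case True
              then have "a j = 0" using basisOn_out[OF aR] R_def by auto
              then show ?thesis using jn True basisOn_lt[OF u jn] unfolding sh_def t1_def by simp
            next
              case False
              then have "j \<in> R" using jn R_def by auto
              then show ?thesis using fun_cong[OF h, of j] jn False
                unfolding restrict_to_def t0_def sh_def t1_def by simp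
            qed
          qed
        qed
      qed
      have dp: "dotp n b t1 = dotp n b x"
        unfolding dotp_def t1_def
        by (rule sum.cong) (use basisOn_out[OF bR] R_def in auto)
      show ?thesis
        using u x t0 t1 cond
        unfolding pauliE_alt2[OF p] tensJ_def R_def[symmetric] a_def[symmetric] b_def[symmetric]
        by (simp add: rJ1 rJ0 rR1 dp)
    qed
    finally show ?thesis using L by simp
  qed
qed

lemma basisOn_mono: "p > 0 \<Longrightarrow> S \<subseteq> T \<Longrightarrow> basisOn S p \<subseteq> basisOn T p"
proof
  fix x assume p: "p > 0" and ST: "S \<subseteq> T" and x: "x \<in> basisOn S p"
  have "x j < p" if "j \<in> T" for j
    using x p unfolding basisOn_def by (cases "j \<in> S") auto
  moreover have "x j = 0" if "j \<notin> T" for j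
    using x ST that unfolding basisOn_def by auto
  ultimately show "x \<in> basisOn T p" unfolding basisOn_def by auto
qed

lemma Fvec_mono: "p > 0 \<Longrightarrow> S \<subseteq> T \<Longrightarrow> Fvec S p \<subseteq> Fvec T p"
  unfolding Fvec_def using basisOn_mono by blast

lemma disjoint_pauli_mult:
  assumes p: "p > 0" and I: "I \<subseteq> {1..n}" and R: "R \<subseteq> {1..n}" and dis: "I \<inter> R = {}"
    and e: "e \<in> Fvec I p" and w: "w \<in> Fvec R p"
  shows "opmult (BB n p) (pauliE n p e) (pauliE n p w) = pauliE n p (vadd p e w)"
proof -
  have eF: "e \<in> Fvec {1..n} p" and wF: "w \<in> Fvec {1..n} p"
    using e w Fvec_mono[OF p I] Fvec_mono[OF p R] by auto
  have "dotp n (snd e) (fst w) = 0"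
    unfolding dotp_def
  proof (rule sum.neutral, rule ballI)
    fix j assume "j \<in> {1..n}"
    show "snd e j * fst w j = 0"
    proof (cases "j \<in> I")
      case True
      then have "j \<notin> R" using dis by auto
      then show ?thesis using w unfolding Fvec_def basisOn_def by auto
    next
      case False
      then show ?thesis using e unfolding Fvec_def basisOn_def by auto
    qed
  qed
  then show ?thesis unfolding pauli_mult[OF p eF wF] by (simp add: scaleop_one)
qed



definition ip :: "(nat \<Rightarrow> nat) set \<Rightarrow> qvec \<Rightarrow> qvec \<Rightarrow> complex" where
  "ip B u v = (\<Sum>x\<in>B. cnj (u x) * v x)"

lemma ip_self: "ip B u u = of_real (\<Sum>x\<in>B. (cmod (u x))^2)"
proof -
  have "cnj (u x) * u x = complex_of_real ((cmod (u x))^2)" for x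
    by (metis complex_norm_square mult.commute)
  then show ?thesis unfolding ip_def of_real_sum by simp
qed

lemma ip_self_zero:
  assumes "finite B" "ip B u u = 0" "x \<in> B"
  shows "u x = 0"
proof -
  have "(\<Sum>x\<in>B. (cmod (u x))^2) = 0" using assms(2) unfolding ip_self of_real_eq_0_iff .
  then have "\<forall>x\<in>B. (cmod (u x))^2 = 0" using assms(1) by (simp add: sum_nonneg_eq_0_iff)
  then show ?thesis using assms(3) by simp
qed

lemma cnj_ip: "cnj (ip B u v) = ip B v u"
  unfolding ip_def by (simp add: mult.commute)

lemma ip_diff_left: "ip B (\<lambda>x. u x - v x) w = ip B u w - ip B v w"
  unfolding ip_def by (simp add: sum_subtractf algebra_simps)
lemma ip_diff_right: "ip B w (\<lambda>x. u x - v x) = ip B w u - ip B w v"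
  unfolding ip_def by (simp add: sum_subtractf algebra_simps)
lemma ip_scale_left: "ip B (\<lambda>x. a * u x) w = cnj a * ip B u w"
  unfolding ip_def by (simp add: sum_distrib_left algebra_simps)
lemma ip_scale_right: "ip B w (\<lambda>x. a * u x) = a * ip B w u"
  unfolding ip_def by (simp add: sum_distrib_left algebra_simps)

lemma proportional:
  assumes fin: "finite B" and x0: "x0 \<in> B" "phi x0 \<noteq> 0"
    and orth: "\<And>psi. ip B psi phi = 0 \<Longrightarrow> ip B psi f = 0"
  shows "\<exists>a. \<forall>x\<in>B. f x = a * phi x"
proof -
  define N where "N = ip B phi phi"
  have Nr: "cnj N = N" unfolding N_def using cnj_ip by metis
  have N0: "N \<noteq> 0"
  proof
    assume "N = 0"
    then have "phi x0 = 0" using ip_self_zero[OF fin _ x0(1), of phi] N_def by simp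
    then show False using x0(2) by simp
  qed
  define a where "a = ip B phi f / N"
  define psi where "psi = (\<lambda>x. f x - a * phi x)"
  have "ip B psi phi = ip B f phi - cnj a * N"
    unfolding psi_def ip_diff_left ip_scale_left N_def ..
  also have "ip B f phi = cnj (ip B phi f)" using cnj_ip by metis
  also have "cnj a * N = cnj (ip B phi f)" unfolding a_def using N0 Nr by simp
  finally have o1: "ip B psi phi = 0" by simp
  then have o2: "ip B psi f = 0" by (rule orth)
  have "ip B psi psi = ip B psi f - a * ip B psi phi"
    by (subst (2) psi_def) (simp only: ip_diff_right ip_scale_right)
  then have "ip B psi psi = 0" using o1 o2 by simp
  then have "\<forall>x\<in>B. psi x = 0" using ip_self_zero[OF fin] by blast
  then show ?thesis unfolding psi_def by auto
qed

lemma KL_generic: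
  fixes B :: "(nat \<Rightarrow> nat) set"
  assumes fin: "finite B" and finA: "finite A" and x0: "x0 \<in> B" "phi x0 \<noteq> 0" and c: "c \<noteq> 0"
    and eq: "\<And>x y. x \<in> B \<Longrightarrow> y \<in> B \<Longrightarrow> c * (\<Sum>i\<in>A. f i x * cnj (f i y)) = phi x * cnj (phi y)"
  shows "\<exists>a. (\<forall>i\<in>A. \<forall>x\<in>B. f i x = a i * phi x) \<and> (\<exists>i\<in>A. a i \<noteq> 0)"
proof -
  have orth: "ip B psi (f i) = 0" if psi: "ip B psi phi = 0" and i: "i \<in> A" for psi i
  proof -
    have "(\<Sum>x\<in>B. \<Sum>y\<in>B. cnj (psi x) * (c * (\<Sum>i\<in>A. f i x * cnj (f i y))) * psi y)
        = (\<Sum>x\<in>B. \<Sum>y\<in>B. cnj (psi x) * (phi x * cnj (phi y)) * psi y)"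
      by (intro sum.cong refl) (simp add: eq)
    also have "\<dots> = ip B psi phi * cnj (ip B psi phi)"
      unfolding ip_def cnj_sum sum_product by (intro sum.cong refl) (simp add: mult_ac)
    also have "\<dots> = 0" using psi by simp
    finally have z: "(\<Sum>x\<in>B. \<Sum>y\<in>B. cnj (psi x) * (c * (\<Sum>i\<in>A. f i x * cnj (f i y))) * psi y) = 0" .
    have "(\<Sum>x\<in>B. \<Sum>y\<in>B. cnj (psi x) * (c * (\<Sum>i\<in>A. f i x * cnj (f i y))) * psi y)
        = c * (\<Sum>i\<in>A. \<Sum>x\<in>B. \<Sum>y\<in>B. cnj (psi x) * f i x * (cnj (f i y) * psi y))"
      by (simp add: sum_distrib_left sum_distrib_right mult_ac sum.swap[of _ A])
    also have "\<dots> = c * (\<Sum>i\<in>A. ip B psi (f i) * cnj (ip B psi (f i)))"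
      unfolding ip_def by (simp add: sum_distrib_left sum_distrib_right mult_ac)
    also have "\<dots> = c * of_real (\<Sum>i\<in>A. (cmod (ip B psi (f i)))^2)"
      by (simp only: complex_norm_square[symmetric] of_real_sum)
    finally have h: "(\<Sum>x\<in>B. \<Sum>y\<in>B. cnj (psi x) * (c * (\<Sum>i\<in>A. f i x * cnj (f i y))) * psi y)
       = c * of_real (\<Sum>i\<in>A. (cmod (ip B psi (f i)))^2)" .
    have "c * of_real (\<Sum>i\<in>A. (cmod (ip B psi (f i)))^2) = 0" using h z by metis
    then have "complex_of_real (\<Sum>i\<in>A. (cmod (ip B psi (f i)))^2) = 0" using c by (simp only: mult_eq_0_iff) simp
    then have "(\<Sum>i\<in>A. (cmod (ip B psi (f i)))^2) = 0" by (simp only: of_real_eq_0_iff)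
    then have "\<forall>i\<in>A. (cmod (ip B psi (f i)))^2 = 0" using finA by (simp add: sum_nonneg_eq_0_iff)
    then show ?thesis using i by simp
  qed
  have "\<forall>i\<in>A. \<exists>a. \<forall>x\<in>B. f i x = a * phi x"
    using proportional[of B x0 phi, OF fin x0] orth by blast
  then obtain a where a: "\<forall>i\<in>A. \<forall>x\<in>B. f i x = a i * phi x" by metis
  have "\<exists>i\<in>A. a i \<noteq> 0"
  proof (rule ccontr)
    assume "\<not> (\<exists>i\<in>A. a i \<noteq> 0)"
    then have "\<forall>i\<in>A. f i x0 = 0" using a x0 by simp
    then have "c * (\<Sum>i\<in>A. f i x0 * cnj (f i x0)) = 0" by simp
    then have "phi x0 * cnj (phi x0) = 0" using eq[OF x0(1) x0(1)] by simp
    then show False using x0 by simp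
  qed
  then show ?thesis using a by blast
qed

lemma conj_outer:
  "opmult B (opmult B X (outer v)) (adj X) u w = opapply B X v u * cnj (opapply B X v w)"
  unfolding opmult_def opapply_def outer_def adj_def
  by (simp add: sum_distrib_left sum_distrib_right mult_ac)

lemma conj_lin:
  "opmult B (opmult B X (\<lambda>u v. c * (\<Sum>e\<in>F. M e u v))) Y x y = c * (\<Sum>e\<in>F. opmult B (opmult B X (M e)) Y x y)"
  unfolding opmult_def
  by (simp add: sum_distrib_left sum_distrib_right mult_ac sum.swap[of _ F])

lemma recovery_expand:
  "applyR n p J m Bk (GammaI n p I (outer phi)) x y
   = (1 / of_nat p ^ (2 * card I)) * (\<Sum>k<m. \<Sum>e\<in>Fvec I p.
       opapply (BB n p) (tensJ n p J (Bk k)) (opapply (BB n p) (pauliE n p e) phi) x *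
       cnj (opapply (BB n p) (tensJ n p J (Bk k)) (opapply (BB n p) (pauliE n p e) phi) y))"
proof -
  have G: "GammaI n p I (outer phi) = (\<lambda>u v. (1 / of_nat p ^ (2 * card I)) *
      (\<Sum>e\<in>Fvec I p. outer (opapply (BB n p) (pauliE n p e) phi) u v))"
    by (simp only: GammaI_def conj_outer) (simp add: outer_def)
  show ?thesis
    unfolding applyR_def opsum_def G conj_lin conj_outer by (simp add: sum_distrib_left)
qed



declare One_nat_def [simp del]

lemma char_sum:
  assumes p: "p > 0" and b: "b \<in> BB n p" and j0: "j0 \<in> {1..n}" "b j0 \<noteq> 0"
  shows "(\<Sum>x\<in>BB n p. xi p (int (dotp n b x))) = 0"
proof -
  define g where "g = (\<lambda>x::nat\<Rightarrow>nat. x(j0 := (x j0 + 1) mod p))"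
  define h where "h = (\<lambda>x::nat\<Rightarrow>nat. x(j0 := (x j0 + (p - 1)) mod p))"
  have bj0: "b j0 < p" using basisOn_lt[OF b j0(1)] .
  have gB: "g x \<in> BB n p" if "x \<in> BB n p" for x
    using that p j0(1) unfolding g_def basisOn_def by auto
  have hB: "h x \<in> BB n p" if "x \<in> BB n p" for x
    using that p j0(1) unfolding h_def basisOn_def by auto
  have hg: "h (g x) = x" if "x \<in> BB n p" for x
  proof -
    have xl: "x j0 < p" using basisOn_lt[OF that j0(1)] .
    have "((x j0 + 1) mod p + (p - 1)) mod p = (x j0 + 1 + (p - 1)) mod p" by (rule mod_add_left_eq)
    also have "x j0 + 1 + (p - 1) = x j0 + p" using p by simp
    finally have "((x j0 + 1) mod p + (p - 1)) mod p = x j0" using xl by simp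
    then show ?thesis unfolding g_def h_def by auto
  qed
  have gh: "g (h x) = x" if "x \<in> BB n p" for x
  proof -
    have xl: "x j0 < p" using basisOn_lt[OF that j0(1)] .
    have "((x j0 + (p - 1)) mod p + 1) mod p = (x j0 + (p - 1) + 1) mod p" by (rule mod_add_left_eq)
    also have "x j0 + (p - 1) + 1 = x j0 + p" using p by simp
    finally have "((x j0 + (p - 1)) mod p + 1) mod p = x j0" using xl by simp
    then show ?thesis unfolding g_def h_def by auto
  qed
  have shift: "xi p (int (dotp n b (g x))) = xi p (int (b j0)) * xi p (int (dotp n b x))" if "x \<in> BB n p" for x
  proof -
    have fin: "finite {1..n}" by simp
    have d1: "dotp n b (g x) = b j0 * ((x j0 + 1) mod p) + (\<Sum>j\<in>{1..n} - {j0}. b j * x j)"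
      unfolding dotp_def using sum.remove[OF fin j0(1), of "\<lambda>j. b j * g x j"]
      by (simp add: g_def)
    have d2: "dotp n b x = b j0 * x j0 + (\<Sum>j\<in>{1..n} - {j0}. b j * x j)"
      unfolding dotp_def using sum.remove[OF fin j0(1), of "\<lambda>j. b j * x j"] by simp
    have "[b j0 * ((x j0 + 1) mod p) + (\<Sum>j\<in>{1..n} - {j0}. b j * x j)
         = b j0 * (x j0 + 1) + (\<Sum>j\<in>{1..n} - {j0}. b j * x j)] (mod p)"
      by (intro cong_add cong_mult cong_refl) (simp add: cong_def)
    then have "dotp n b (g x) mod p = (b j0 + dotp n b x) mod p"
      unfolding d1 d2 cong_def by (simp add: algebra_simps)
    then have "xi p (int (dotp n b (g x))) = xi p (int (b j0 + dotp n b x))" by (rule xi_nat_cong[OF p])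
    then show ?thesis by (simp add: xi_add)
  qed
  define S where "S = (\<Sum>x\<in>BB n p. xi p (int (dotp n b x)))"
  have "S = (\<Sum>x\<in>BB n p. xi p (int (dotp n b (g x))))"
    unfolding S_def
    by (rule sum.reindex_bij_witness[where i=g and j=h]) (simp_all add: hg gh gB hB)
  also have "\<dots> = xi p (int (b j0)) * S" unfolding S_def sum_distrib_left by (rule sum.cong) (simp_all add: shift)
  finally have "(1 - xi p (int (b j0))) * S = 0" by (simp add: algebra_simps)
  moreover have "xi p (int (b j0)) \<noteq> 1" using xi_neq1 j0(2) bj0 by simp
  ultimately show ?thesis unfolding S_def by simp
qed

definition trE :: "nat \<Rightarrow> nat \<Rightarrow> svec \<Rightarrow> complex" where
  "trE n p y = (\<Sum>x\<in>BB n p. pauliE n p y x x)"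

lemma trE_zero: "trE n p ((\<lambda>_. 0), (\<lambda>_. 0)) = of_nat (card (BB n p))"
  unfolding trE_def pauliE_zero idop_def by simp

lemma trE_nonzero:
  assumes p: "p > 0" and y: "y \<in> Fvec {1..n} p" and ne: "y \<noteq> ((\<lambda>_. 0), (\<lambda>_. 0))"
  shows "trE n p y = 0"
proof (cases "\<exists>j\<in>{1..n}. fst y j \<noteq> 0")
  case True
  then obtain j where j: "j \<in> {1..n}" "fst y j \<noteq> 0" by blast
  have "pauliE n p y x x = 0" if x: "x \<in> BB n p" for x
  proof -
    have xl: "x j < p" using basisOn_lt[OF x j(1)] .
    have al: "fst y j < p" using y j(1) unfolding Fvec_def basisOn_def by auto
    have "(x j + fst y j) mod p \<noteq> x j"
    proof (cases "x j + fst y j < p")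
      case True then show ?thesis using j(2) by simp
    next
      case False
      then have "(x j + fst y j) mod p = x j + fst y j - p"
        using al xl by (simp add: mod_if)
      then show ?thesis using al False by arith
    qed
    then have "x \<noteq> sh n p (fst y) x" using j(1) unfolding sh_def by (metis)
    then show ?thesis unfolding pauliE_alt2[OF p] by simp
  qed
  then show ?thesis unfolding trE_def by simp
next
  case False
  have a0: "fst y = (\<lambda>_. 0)"
  proof
    fix j show "fst y j = 0"
      using False y unfolding Fvec_def basisOn_def by (cases "j \<in> {1..n}") auto
  qed
  have "\<exists>j\<in>{1..n}. snd y j \<noteq> 0"
  proof (rule ccontr)
    assume "\<not> (\<exists>j\<in>{1..n}. snd y j \<noteq> 0)"
    then have "snd y = (\<lambda>_. 0)" using y unfolding Fvec_def basisOn_def by (auto intro!: ext)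
    then show False using ne a0 by (metis prod.collapse)
  qed
  then obtain j where j: "j \<in> {1..n}" "snd y j \<noteq> 0" by blast
  have sh0: "sh n p (fst y) x = x" if x: "x \<in> BB n p" for x
  proof
    fix i show "sh n p (fst y) x i = x i"
      using x a0 unfolding sh_def basisOn_def by auto
  qed
  have bB: "snd y \<in> BB n p" using y unfolding Fvec_def by auto
  have "trE n p y = (\<Sum>x\<in>BB n p. xi p (int (dotp n (snd y) x)))"
    unfolding trE_def by (rule sum.cong) (simp_all add: pauliE_alt2[OF p] sh0)
  also have "\<dots> = 0" by (rule char_sum[OF p bB j])
  finally show ?thesis .
qed

lemma vadd_cancel:
  assumes "y \<in> Fvec {1..n} p" "z1 \<in> Fvec {1..n} p" "z2 \<in> Fvec {1..n} p" "vadd p y z1 = vadd p y z2"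
  shows "z1 = z2"
proof -
  have c: "u1 = u2" if "(a + u1) mod p = (a + u2) mod p" "u1 < p" "u2 < p" for a u1 u2 :: nat
  proof -
    have "[a + u1 = a + u2] (mod p)" using that(1) unfolding cong_def .
    then have "[u1 = u2] (mod p)" by (simp add: cong_add_lcancel_nat)
    then show ?thesis using that(2,3) unfolding cong_def by simp
  qed
  have f: "fst z1 j = fst z2 j" for j
  proof (cases "j \<in> {1..n}")
    case True
    then show ?thesis using c[of "fst y j" "fst z1 j" "fst z2 j"] assms unfolding vadd_def Fvec_def basisOn_def
      by (auto dest: fun_cong[where x=j])
  next
    case False
    then show ?thesis using assms unfolding Fvec_def basisOn_def by auto
  qed
  have s: "snd z1 j = snd z2 j" for j
  proof (cases "j \<in> {1..n}")
    case True
    then show ?thesis using c[of "snd y j" "snd z1 j" "snd z2 j"] assms unfolding vadd_def Fvec_def basisOn_def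
      by (auto dest: fun_cong[where x=j])
  next
    case False
    then show ?thesis using assms unfolding Fvec_def basisOn_def by auto
  qed
  show ?thesis using f s by (simp add: prod_eq_iff fun_eq_iff)
qed

lemma vadd_zero_neg:
  assumes p: "p > 0" and z: "z \<in> Fvec {1..n} p" and c: "c \<in> Fvec {1..n} p"
    and e: "vadd p z c = ((\<lambda>_. 0), (\<lambda>_. 0))"
  shows "z = vscale p (p - 1) c"
proof -
  have k: "u = ((p - 1) * v) mod p" if "(u + v) mod p = 0" "u < p" for u v :: nat
  proof -
    have "[u + v = 0] (mod p)" using that(1) unfolding cong_def by simp
    moreover have "[(p - 1) * v + v = 0] (mod p)"
    proof -
      have "(p - 1) * v + v = p * v" using p by (simp add: algebra_simps)
      then show ?thesis unfolding cong_def by simp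
    qed
    ultimately have "[u + v = (p - 1) * v + v] (mod p)" by (metis cong_sym cong_trans)
    then have "[u = (p - 1) * v] (mod p)" by (simp add: cong_add_rcancel_nat)
    then show ?thesis using that(2) unfolding cong_def by simp
  qed
  have f: "fst z j = fst (vscale p (p - 1) c) j" for j
  proof (cases "j \<in> {1..n}")
    case True
    have "(fst z j + fst c j) mod p = 0" using fun_cong[OF arg_cong[where f=fst, OF e], of j] unfolding vadd_def by simp
    then show ?thesis using k[of "fst z j" "fst c j"] z True unfolding vscale_def Fvec_def basisOn_def by auto
  next
    case False
    then show ?thesis using z c unfolding vscale_def Fvec_def basisOn_def by auto
  qed
  have s: "snd z j = snd (vscale p (p - 1) c) j" for j
  proof (cases "j \<in> {1..n}")
    case True
    have "(snd z j + snd c j) mod p = 0" using fun_cong[OF arg_cong[where f=snd, OF e], of j] unfolding vadd_def by simp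
    then show ?thesis using k[of "snd z j" "snd c j"] z True unfolding vscale_def Fvec_def basisOn_def by auto
  next
    case False
    then show ?thesis using z c unfolding vscale_def Fvec_def basisOn_def by auto
  qed
  show ?thesis using f s by (simp add: prod_eq_iff fun_eq_iff)
qed



declare One_nat_def [simp del]

definition Pcol :: "nat \<Rightarrow> nat \<Rightarrow> svec set \<Rightarrow> (qop \<Rightarrow> complex) \<Rightarrow> (nat \<Rightarrow> nat) \<Rightarrow> qvec" where
  "Pcol n p C lam x = (\<lambda>u. \<Sum>c\<in>C. inverse (lam (pauliE n p c)) * pauliE n p c u x)"

context stabctx
begin

lemma apply_Pcol:
  "opapply (BB n p) M (Pcol n p C lam x) u
   = (\<Sum>c\<in>C. inverse (lam (pauliE n p c)) * opmult (BB n p) M (pauliE n p c) u x)"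
proof -
  have "opapply (BB n p) M (Pcol n p C lam x) u
      = (\<Sum>t\<in>BB n p. \<Sum>c\<in>C. inverse (lam (pauliE n p c)) * (M u t * pauliE n p c t x))"
    unfolding opapply_def Pcol_def by (simp add: sum_distrib_left mult_ac)
  also have "\<dots> = (\<Sum>c\<in>C. \<Sum>t\<in>BB n p. inverse (lam (pauliE n p c)) * (M u t * pauliE n p c t x))"
    by (rule sum.swap)
  also have "\<dots> = (\<Sum>c\<in>C. inverse (lam (pauliE n p c)) * opmult (BB n p) M (pauliE n p c) u x)"
    unfolding opmult_def by (simp add: sum_distrib_left)
  finally show ?thesis .
qed

lemma vadd_image:
  assumes c': "c' \<in> C"
  shows "vadd p c' ` C = C" "inj_on (vadd p c') C"
proof -
  show inj: "inj_on (vadd p c') C"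
    unfolding inj_on_def using vadd_cancel[of c' n p] C_sub c' by blast
  show "vadd p c' ` C = C"
    by (rule endo_inj_surj[OF finite_C _ inj]) (use C_vadd c' in blast)
qed

lemma Pcol_Q:
  assumes x: "x \<in> BB n p"
  shows "Pcol n p C lam x \<in> stabQ n p C lam"
  unfolding stabQ_def
proof (intro CollectI conjI allI impI ballI)
  fix u assume "u \<notin> BB n p"
  then show "Pcol n p C lam x u = 0" unfolding Pcol_def by (simp add: pauliE_offB1)
next
  fix X u assume X: "X \<in> stabGroup n p C" and u: "u \<in> BB n p"
  have "\<forall>u\<in>BB n p. opapply (BB n p) X (Pcol n p C lam x) u = lam X * Pcol n p C lam x u"
    using X
  proof (induction rule: stabGroup.induct)
    case (scal l)
    then show ?case using opapply_scaleop_id[OF finite_BB] lam_scal by simp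
  next
    case (gen c')
    show ?case
    proof
      fix u assume u: "u \<in> BB n p"
      have c'F: "c' \<in> Fvec {1..n} p" using gen C_sub by auto
      have "opapply (BB n p) (pauliE n p c') (Pcol n p C lam x) u
          = (\<Sum>c\<in>C. lam (pauliE n p c') * (inverse (lam (pauliE n p (vadd p c' c))) * pauliE n p (vadd p c' c) u x))"
      proof -
        have "inverse (lam (pauliE n p c)) * opmult (BB n p) (pauliE n p c') (pauliE n p c) u x
            = lam (pauliE n p c') * (inverse (lam (pauliE n p (vadd p c' c))) * pauliE n p (vadd p c' c) u x)"
          if c: "c \<in> C" for c
        proof -
          have cF: "c \<in> Fvec {1..n} p" using c C_sub by auto
          have k: "lam (pauliE n p c') * lam (pauliE n p c) = xi p (int (dotp n (snd c') (fst c))) * lam (pauliE n p (vadd p c' c))"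
            by (rule lam_pauli_mult[OF gen c])
          have n1: "lam (pauliE n p c) \<noteq> 0" by (rule lam_pauli_ne0[OF c])
          have n2: "lam (pauliE n p (vadd p c' c)) \<noteq> 0" by (rule lam_pauli_ne0[OF C_vadd[OF gen c]])
          have "inverse (lam (pauliE n p c)) * xi p (int (dotp n (snd c') (fst c)))
              = lam (pauliE n p c') * inverse (lam (pauliE n p (vadd p c' c)))"
            using k n1 n2 by (simp add: field_simps)
          then show ?thesis
            unfolding pauli_mult[OF p c'F cF] scaleop_def by (simp add: mult_ac)
        qed
        then show ?thesis unfolding apply_Pcol by (rule sum.cong[OF refl])
      qed
      also have "\<dots> = lam (pauliE n p c') * (\<Sum>d\<in>vadd p c' ` C. inverse (lam (pauliE n p d)) * pauliE n p d u x)"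
        unfolding sum_distrib_left[symmetric] by (simp add: sum.reindex[OF vadd_image(2)[OF gen]])
      also have "\<dots> = lam (pauliE n p c') * Pcol n p C lam x u"
        unfolding vadd_image(1)[OF gen] Pcol_def ..
      finally show "opapply (BB n p) (pauliE n p c') (Pcol n p C lam x) u = lam (pauliE n p c') * Pcol n p C lam x u" .
    qed
  next
    case (mult X Y)
    show ?case
    proof
      fix u assume u: "u \<in> BB n p"
      have "opapply (BB n p) (opmult (BB n p) X Y) (Pcol n p C lam x) u
          = opapply (BB n p) X (opapply (BB n p) Y (Pcol n p C lam x)) u"
        unfolding opapply_opmult[OF finite_BB] ..
      also have "opapply (BB n p) X (opapply (BB n p) Y (Pcol n p C lam x))
          = opapply (BB n p) X (\<lambda>t. lam Y * Pcol n p C lam x t)"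
        by (rule opapply_cong) (use mult.IH(2) in blast)
      also have "\<dots> = (\<lambda>t. lam Y * opapply (BB n p) X (Pcol n p C lam x) t)" by (rule opapply_scale)
      finally show "opapply (BB n p) (opmult (BB n p) X Y) (Pcol n p C lam x) u = lam (opmult (BB n p) X Y) * Pcol n p C lam x u"
        using mult.IH(1) u lam_mult[OF mult.hyps] by simp
    qed
  qed
  then show "opapply (BB n p) X (Pcol n p C lam x) u = lam X * Pcol n p C lam x u" using u by blast
qed

lemma trace_P: "(\<Sum>x\<in>BB n p. Pcol n p C lam x x) = of_nat (card (BB n p))"
proof -
  have "(\<Sum>x\<in>BB n p. Pcol n p C lam x x) = (\<Sum>c\<in>C. inverse (lam (pauliE n p c)) * trE n p c)"
    unfolding Pcol_def trE_def sum_distrib_left by (rule sum.swap)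
  also have "\<dots> = (\<Sum>c\<in>C. if c = ((\<lambda>_. 0), (\<lambda>_. 0)) then of_nat (card (BB n p)) else 0)"
  proof (rule sum.cong[OF refl])
    fix c assume c: "c \<in> C"
    show "inverse (lam (pauliE n p c)) * trE n p c = (if c = ((\<lambda>_. 0), (\<lambda>_. 0)) then of_nat (card (BB n p)) else 0)"
      using trE_nonzero[OF p, of c n] C_sub c trE_zero lam_E0 by auto
  qed
  also have "\<dots> = of_nat (card (BB n p))" using finite_C C_zero by simp
  finally show ?thesis .
qed

lemma trace_EzP:
  assumes z: "z \<in> Fvec {1..n} p" and nz: "\<forall>c\<in>C. vadd p z c \<noteq> ((\<lambda>_. 0), (\<lambda>_. 0))"
  shows "(\<Sum>x\<in>BB n p. opapply (BB n p) (pauliE n p z) (Pcol n p C lam x) x) = 0"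
proof -
  have "(\<Sum>x\<in>BB n p. opapply (BB n p) (pauliE n p z) (Pcol n p C lam x) x)
      = (\<Sum>x\<in>BB n p. \<Sum>c\<in>C. inverse (lam (pauliE n p c)) * (xi p (int (dotp n (snd z) (fst c))) * pauliE n p (vadd p z c) x x))"
  proof (rule sum.cong[OF refl])
    fix x
    show "opapply (BB n p) (pauliE n p z) (Pcol n p C lam x) x
      = (\<Sum>c\<in>C. inverse (lam (pauliE n p c)) * (xi p (int (dotp n (snd z) (fst c))) * pauliE n p (vadd p z c) x x))"
      unfolding apply_Pcol
    proof (rule sum.cong[OF refl])
      fix c assume "c \<in> C"
      then have cF: "c \<in> Fvec {1..n} p" using C_sub by auto
      show "inverse (lam (pauliE n p c)) * opmult (BB n p) (pauliE n p z) (pauliE n p c) x x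
          = inverse (lam (pauliE n p c)) * (xi p (int (dotp n (snd z) (fst c))) * pauliE n p (vadd p z c) x x)"
        unfolding pauli_mult[OF p z cF] scaleop_def ..
    qed
  qed
  also have "\<dots> = (\<Sum>c\<in>C. inverse (lam (pauliE n p c)) * (xi p (int (dotp n (snd z) (fst c))) * trE n p (vadd p z c)))"
    unfolding trE_def sum_distrib_left by (rule sum.swap)
  also have "\<dots> = 0"
  proof (rule sum.neutral, rule ballI)
    fix c assume c: "c \<in> C"
    have "trE n p (vadd p z c) = 0"
      by (rule trE_nonzero[OF p vadd_Fvec[OF p z]]) (use c C_sub nz in auto)
    then show "inverse (lam (pauliE n p c)) * (xi p (int (dotp n (snd z) (fst c))) * trE n p (vadd p z c)) = 0" by simp
  qed
  finally show ?thesis .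
qed

end



declare One_nat_def [simp del]

lemma opapply_scaleop: "opapply B (scaleop a M) v = (\<lambda>x. a * opapply B M v x)"
  unfolding opapply_def scaleop_def by (simp add: sum_distrib_left mult_ac)

lemma opapply_diff: "opapply B X (\<lambda>x. v x - w x) = (\<lambda>x. opapply B X v x - opapply B X w x)"
  unfolding opapply_def by (simp add: algebra_simps sum_subtractf)

context stabctx
begin

lemma uniform:
  assumes eig: "\<forall>phi\<in>stabQ n p C lam. \<exists>s. \<forall>x\<in>BB n p. opapply (BB n p) M phi x = s * phi x"
    and phi0: "phi0 \<in> stabQ n p C lam" "x0 \<in> BB n p" "phi0 x0 \<noteq> 0"
    and s0: "\<forall>x\<in>BB n p. opapply (BB n p) M phi0 x = s0 * phi0 x"
    and phi: "phi \<in> stabQ n p C lam"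
  shows "\<forall>x\<in>BB n p. opapply (BB n p) M phi x = s0 * phi x"
proof -
  obtain s where s: "\<forall>x\<in>BB n p. opapply (BB n p) M phi x = s * phi x" using eig phi by blast
  obtain s' where s': "\<forall>x\<in>BB n p. opapply (BB n p) M (\<lambda>x. phi x + phi0 x) x = s' * (phi x + phi0 x)"
    using eig stabQ_add[OF phi phi0(1)] by blast
  have lin: "\<forall>x\<in>BB n p. (s - s') * phi x = (s' - s0) * phi0 x"
  proof
    fix x assume x: "x \<in> BB n p"
    have "s * phi x + s0 * phi0 x = s' * (phi x + phi0 x)"
      using s' x s s0 unfolding opapply_add by simp
    then show "(s - s') * phi x = (s' - s0) * phi0 x" by (simp add: algebra_simps)
  qed
  show ?thesis
  proof (cases "s = s'")
    case True
    then have "(s' - s0) * phi0 x0 = 0" using lin phi0(2) by auto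
    then have "s = s0" using True phi0(3) by simp
    then show ?thesis using s by simp
  next
    case False
    define t where "t = (s' - s0) / (s - s')"
    have pt: "\<forall>x\<in>BB n p. phi x = t * phi0 x"
      using lin False unfolding t_def by (simp add: field_simps)
    have "opapply (BB n p) M phi = opapply (BB n p) M (\<lambda>x. t * phi0 x)"
      by (rule opapply_cong) (use pt in blast)
    also have "\<dots> = (\<lambda>x. t * opapply (BB n p) M phi0 x)" by (rule opapply_scale)
    finally show ?thesis using s0 pt by simp
  qed
qed

lemma KL_apply:
  assumes rec: "\<forall>phi\<in>stabQ n p C lam. \<forall>x\<in>BB n p. \<forall>y\<in>BB n p.
           applyR n p J m Bk (GammaI n p I (outer phi)) x y = outer phi x y"
    and I: "I \<subseteq> {1..n}"
    and phi: "phi \<in> stabQ n p C lam" and x0: "x0 \<in> BB n p" "phi x0 \<noteq> 0"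
  shows "\<exists>a. (\<forall>k<m. \<forall>e\<in>Fvec I p. \<forall>x\<in>BB n p.
              opapply (BB n p) (tensJ n p J (Bk k)) (opapply (BB n p) (pauliE n p e) phi) x = a (k, e) * phi x)
           \<and> (\<exists>k<m. \<exists>e\<in>Fvec I p. a (k, e) \<noteq> 0)"
proof -
  define f where "f = (\<lambda>(k, e). opapply (BB n p) (tensJ n p J (Bk k)) (opapply (BB n p) (pauliE n p e) phi))"
  have finF: "finite (Fvec I p)" unfolding Fvec_def using finite_basisOn[of I p] finite_subset[OF I] by simp
  have c: "(1 / of_nat p ^ (2 * card I) :: complex) \<noteq> 0" using p by simp
  have eq: "(1 / of_nat p ^ (2 * card I)) * (\<Sum>i\<in>{..<m} \<times> Fvec I p. f i x * cnj (f i y)) = phi x * cnj (phi y)"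
    if "x \<in> BB n p" "y \<in> BB n p" for x y
  proof -
    have "(\<Sum>k<m. \<Sum>e\<in>Fvec I p. f (k, e) x * cnj (f (k, e) y))
        = (\<Sum>(k, e)\<in>{..<m} \<times> Fvec I p. f (k, e) x * cnj (f (k, e) y))"
      by (rule sum.cartesian_product)
    also have "\<dots> = (\<Sum>i\<in>{..<m} \<times> Fvec I p. f i x * cnj (f i y))"
      by (rule sum.cong) auto
    finally have "(\<Sum>i\<in>{..<m} \<times> Fvec I p. f i x * cnj (f i y))
        = (\<Sum>k<m. \<Sum>e\<in>Fvec I p. f (k, e) x * cnj (f (k, e) y))" by simp
    note sumeq = this
    have r: "applyR n p J m Bk (GammaI n p I (outer phi)) x y = outer phi x y" using rec phi that by blast
    have r2: "(1 / of_nat p ^ (2 * card I)) * (\<Sum>k<m. \<Sum>e\<in>Fvec I p.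
       opapply (BB n p) (tensJ n p J (Bk k)) (opapply (BB n p) (pauliE n p e) phi) x *
       cnj (opapply (BB n p) (tensJ n p J (Bk k)) (opapply (BB n p) (pauliE n p e) phi) y)) = phi x * cnj (phi y)"
      using r[unfolded recovery_expand, unfolded outer_def] .
    show ?thesis unfolding sumeq using r2 by (simp add: f_def)
  qed
  obtain a where a: "\<forall>i\<in>{..<m} \<times> Fvec I p. \<forall>x\<in>BB n p. f i x = a i * phi x"
    and nz: "\<exists>i\<in>{..<m} \<times> Fvec I p. a i \<noteq> 0"
    using KL_generic[of "BB n p" "{..<m} \<times> Fvec I p" x0 phi "1 / of_nat p ^ (2 * card I)" f, OF finite_BB _ x0 c] finF eq by blast
  show ?thesis
    apply (rule exI[of _ a])
    using a nz unfolding f_def by auto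
qed

end



declare One_nat_def [simp del]

context stabctx
begin

lemma eig_z:
  assumes rec: "\<forall>phi\<in>stabQ n p C lam. \<forall>x\<in>BB n p. \<forall>y\<in>BB n p.
           applyR n p J m Bk (GammaI n p I (outer phi)) x y = outer phi x y"
    and I: "I \<subseteq> {1..n}" and J: "J \<subseteq> {1..n}" and IJ: "I \<subseteq> J"
    and y: "y \<in> symp_dual n p C"
    and zI: "z \<in> Fvec I p" and wR: "w \<in> Fvec ({1..n} - J) p" and ywz: "vadd p w z = y"
    and phi: "phi \<in> stabQ n p C lam"
  shows "\<exists>s. \<forall>x\<in>BB n p. opapply (BB n p) (pauliE n p z) phi x = s * phi x"
proof (cases "\<forall>x\<in>BB n p. phi x = 0")
  case True
  have "opapply (BB n p) (pauliE n p z) phi = opapply (BB n p) (pauliE n p z) (\<lambda>_. 0)"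
    by (rule opapply_cong) (use True in blast)
  then have "\<forall>x\<in>BB n p. opapply (BB n p) (pauliE n p z) phi x = 0 * phi x" by (simp add: opapply_def)
  then show ?thesis by blast
next
  case False
  then obtain x0 where x0: "x0 \<in> BB n p" "phi x0 \<noteq> 0" by blast
  define R where "R = {1..n} - J"
  have R: "R \<subseteq> {1..n}" and dis: "I \<inter> R = {}" and dis': "R \<inter> I = {}" using IJ unfolding R_def by auto
  have wR': "w \<in> Fvec R p" using wR R_def by simp
  have yF: "y \<in> Fvec {1..n} p" using y unfolding symp_dual_def by auto
  have zF: "z \<in> Fvec {1..n} p" using zI Fvec_mono[OF p I] by auto
  have wF: "w \<in> Fvec {1..n} p" using wR' Fvec_mono[OF p R] by auto
  define psi where "psi = opapply (BB n p) (pauliE n p y) phi"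
  have psiQ: "psi \<in> stabQ n p C lam" unfolding psi_def by (rule dual_preserves_Q[OF y phi])
  have psi_wz: "psi = opapply (BB n p) (pauliE n p w) (opapply (BB n p) (pauliE n p z) phi)"
    unfolding psi_def opapply_opmult[OF finite_BB, symmetric] disjoint_pauli_mult[OF p R I dis' wR' zI] ywz ..
  obtain x1 where x1: "x1 \<in> BB n p" "psi x1 \<noteq> 0"
  proof -
    have "\<not> (\<forall>x\<in>BB n p. psi x = 0)"
      using pauli_inj[OF p yF, of phi] x0 unfolding psi_def by blast
    then show ?thesis using that by blast
  qed
  obtain a where a: "\<forall>k<m. \<forall>e\<in>Fvec I p. \<forall>x\<in>BB n p.
      opapply (BB n p) (tensJ n p J (Bk k)) (opapply (BB n p) (pauliE n p e) phi) x = a (k, e) * phi x"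
    using KL_apply[OF rec I phi x0] by blast
  obtain b k e where b: "\<forall>k<m. \<forall>e\<in>Fvec I p. \<forall>x\<in>BB n p.
      opapply (BB n p) (tensJ n p J (Bk k)) (opapply (BB n p) (pauliE n p e) psi) x = b (k, e) * psi x"
    and k: "k < m" and e: "e \<in> Fvec I p" and bnz: "b (k, e) \<noteq> 0"
    using KL_apply[OF rec I psiQ x1] by blast
  have eF: "e \<in> Fvec {1..n} p" using e Fvec_mono[OF p I] by auto
  define ez where "ez = vadd p e z"
  have ez: "ez \<in> Fvec I p" unfolding ez_def by (rule vadd_Fvec[OF p e zI])
  define om where "om = xi p (int (dotp n (snd e) (fst z)))"
  define T where "T = tensJ n p J (Bk k)"
  let ?A = "\<lambda>M v. opapply (BB n p) M v"
  have c_ew: "?A (pauliE n p e) (?A (pauliE n p w) v) = ?A (pauliE n p w) (?A (pauliE n p e) v)" for v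
  proof -
    have "opmult (BB n p) (pauliE n p e) (pauliE n p w) = opmult (BB n p) (pauliE n p w) (pauliE n p e)"
      unfolding disjoint_pauli_mult[OF p I R dis e wR'] disjoint_pauli_mult[OF p R I dis' wR' e]
      by (simp add: vadd_def add.commute)
    then show ?thesis unfolding opapply_opmult[OF finite_BB, symmetric] by simp
  qed
  have c_ez: "?A (pauliE n p e) (?A (pauliE n p z) v) = (\<lambda>x. om * ?A (pauliE n p ez) v x)" for v
    unfolding opapply_opmult[OF finite_BB, symmetric] pauli_mult[OF p eF zF] opapply_scaleop om_def ez_def ..
  have c_Tw: "?A T (?A (pauliE n p w) v) = ?A (pauliE n p w) (?A T v)" for v
    unfolding T_def opapply_opmult[OF finite_BB, symmetric] tens_commute[OF p J wR] ..
  have "?A T (?A (pauliE n p e) psi) = ?A T (?A (pauliE n p w) (?A (pauliE n p e) (?A (pauliE n p z) phi)))"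
    unfolding psi_wz c_ew ..
  also have "\<dots> = ?A (pauliE n p w) (?A T (\<lambda>x. om * ?A (pauliE n p ez) phi x))"
    unfolding c_Tw c_ez ..
  also have "\<dots> = ?A (pauliE n p w) (\<lambda>x. om * ?A T (?A (pauliE n p ez) phi) x)"
    unfolding opapply_scale ..
  also have "\<dots> = ?A (pauliE n p w) (\<lambda>x. om * a (k, ez) * phi x)"
    by (rule opapply_cong) (use a k ez in \<open>simp add: T_def\<close>)
  finally have L: "?A T (?A (pauliE n p e) psi) = ?A (pauliE n p w) (\<lambda>x. om * a (k, ez) * phi x)" .
  have Rr: "\<forall>x\<in>BB n p. ?A T (?A (pauliE n p e) psi) x = ?A (pauliE n p w) (\<lambda>t. b (k, e) * ?A (pauliE n p z) phi t) x"
    using b k e unfolding T_def opapply_scale psi_wz[symmetric] by simp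
  have "\<forall>x\<in>BB n p. ?A (pauliE n p w) (\<lambda>t. om * a (k, ez) * phi t - b (k, e) * ?A (pauliE n p z) phi t) x = 0"
    unfolding opapply_diff using L Rr by simp
  then have "\<forall>t\<in>BB n p. om * a (k, ez) * phi t - b (k, e) * ?A (pauliE n p z) phi t = 0"
    by (rule pauli_inj[OF p wF])
  then have "\<forall>t\<in>BB n p. ?A (pauliE n p z) phi t = (om * a (k, ez) / b (k, e)) * phi t"
    using bnz by (simp add: field_simps)
  then show ?thesis by blast
qed

end



declare One_nat_def [simp del]

context stabctx
begin

lemma z_in_C:
  assumes rec: "\<forall>phi\<in>stabQ n p C lam. \<forall>x\<in>BB n p. \<forall>y\<in>BB n p.
           applyR n p J m Bk (GammaI n p I (outer phi)) x y = outer phi x y"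
    and I: "I \<subseteq> {1..n}" and J: "J \<subseteq> {1..n}" and IJ: "I \<subseteq> J"
    and y: "y \<in> symp_dual n p C"
    and zI: "z \<in> Fvec I p" and wR: "w \<in> Fvec ({1..n} - J) p" and ywz: "vadd p w z = y"
  shows "z \<in> C"
proof (rule ccontr)
  assume zn: "z \<notin> C"
  have zF: "z \<in> Fvec {1..n} p" using zI Fvec_mono[OF p I] by auto
  have nz: "\<forall>c\<in>C. vadd p z c \<noteq> ((\<lambda>_. 0), (\<lambda>_. 0))"
  proof (intro ballI notI)
    fix c assume c: "c \<in> C" and e: "vadd p z c = ((\<lambda>_. 0), (\<lambda>_. 0))"
    have "z = vscale p (p - 1) c" using vadd_zero_neg[OF p zF _ e] c C_sub by auto
    then show False using C_vscale[OF _ c, of "p - 1"] p zn by simp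
  qed
  have eig: "\<forall>phi\<in>stabQ n p C lam. \<exists>s. \<forall>x\<in>BB n p. opapply (BB n p) (pauliE n p z) phi x = s * phi x"
    using eig_z[OF rec I J IJ y zI wR ywz] by blast
  have cardB: "card (BB n p) \<noteq> 0"
  proof -
    have "(\<lambda>_. 0) \<in> BB n p" unfolding basisOn_def using p by simp
    then show ?thesis using finite_BB by (metis card_0_eq empty_iff)
  qed
  obtain x0 where x0: "x0 \<in> BB n p" "Pcol n p C lam x0 x0 \<noteq> 0"
  proof -
    have "\<not> (\<forall>x\<in>BB n p. Pcol n p C lam x x = 0)"
      using trace_P cardB by (metis (mono_tags, lifting) of_nat_eq_0_iff sum.neutral)
    then show ?thesis using that by blast
  qed
  have phi0: "Pcol n p C lam x0 \<in> stabQ n p C lam" by (rule Pcol_Q[OF x0(1)])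
  obtain s0 where s0: "\<forall>x\<in>BB n p. opapply (BB n p) (pauliE n p z) (Pcol n p C lam x0) x = s0 * Pcol n p C lam x0 x"
    using eig phi0 by blast
  have all: "\<forall>t\<in>BB n p. opapply (BB n p) (pauliE n p z) (Pcol n p C lam x) t = s0 * Pcol n p C lam x t"
    if "x \<in> BB n p" for x
    by (rule uniform[OF eig phi0 x0 s0 Pcol_Q[OF that]])
  have "(\<Sum>x\<in>BB n p. opapply (BB n p) (pauliE n p z) (Pcol n p C lam x) x) = (\<Sum>x\<in>BB n p. s0 * Pcol n p C lam x x)"
    by (rule sum.cong) (use all in auto)
  also have "\<dots> = s0 * of_nat (card (BB n p))" unfolding sum_distrib_left[symmetric] trace_P ..
  finally have "s0 * of_nat (card (BB n p)) = 0" using trace_EzP[OF zF nz] by simp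
  then have "s0 = 0" using cardB by simp
  then have "\<forall>x\<in>BB n p. opapply (BB n p) (pauliE n p z) (Pcol n p C lam x0) x = 0" using s0 by simp
  then have "\<forall>x\<in>BB n p. Pcol n p C lam x0 x = 0" by (rule pauli_inj[OF p zF])
  then show False using x0 by blast
qed

end

theorem proposition17:
  fixes p n :: nat and C :: "svec set" and I J :: "nat set" and lam :: "qop \<Rightarrow> complex"
  assumes "prime p"
    and "is_code n p C"
    and "C \<subseteq> symp_dual n p C"
    and "is_stab_character n p C lam"
    and "I \<noteq> {}" and "I \<subset> J" and "J \<subset> {1..n}"
    and "locally_recoverable n p I J (stabQ n p C lam)"
  shows "shorten I (puncture J (symp_dual n p C)) = shorten I C"
proof -
  have p: "p > 0" using assms(1) by (simp add: prime_gt_0_nat)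
  interpret stabctx n p C lam
    by unfold_locales (use p assms(2,4) in auto)
  have IJ: "I \<subseteq> J" and J: "J \<subseteq> {1..n}" using assms(6,7) by auto
  have I: "I \<subseteq> {1..n}" using IJ J by auto
  obtain m Bk where rec: "\<forall>phi\<in>stabQ n p C lam. \<forall>x\<in>BB n p. \<forall>y\<in>BB n p.
           applyR n p J m Bk (GammaI n p I (outer phi)) x y = outer phi x y"
    using assms(8) unfolding locally_recoverable_def by blast
  have projproj: "proj I (proj J y) = proj I y" for y
    using IJ unfolding proj_def restrict_to_def by (auto intro!: ext)
  show ?thesis
  proof
    show "shorten I (puncture J (symp_dual n p C)) \<subseteq> shorten I C"
    proof
      fix v assume "v \<in> shorten I (puncture J (symp_dual n p C))"
      then obtain y where y: "y \<in> symp_dual n p C" and supp: "supp (proj J y) \<subseteq> I"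
        and v: "v = proj I (proj J y)"
        unfolding shorten_def puncture_def by blast
      have yF: "y \<in> Fvec {1..n} p" using y unfolding symp_dual_def by auto
      define z where "z = proj I y"
      define w where "w = proj ({1..n} - J) y"
      have zI: "z \<in> Fvec I p"
        using yF I unfolding z_def proj_def restrict_to_def Fvec_def basisOn_def by auto
      have wR: "w \<in> Fvec ({1..n} - J) p"
        using yF unfolding w_def proj_def restrict_to_def Fvec_def basisOn_def by auto
      have van1: "fst y j = 0" if "j \<in> J" "j \<notin> I" for j
        using supp that unfolding supp_def proj_def restrict_to_def by auto
      have van2: "snd y j = 0" if "j \<in> J" "j \<notin> I" for j
        using supp that unfolding supp_def proj_def restrict_to_def by auto
      have ywz: "vadd p w z = y"
      proof -
        have f: "(restrict_to (fst y) ({1..n} - J) j + restrict_to (fst y) I j) mod p = fst y j" for j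
          using yF I IJ van1[of j] unfolding restrict_to_def Fvec_def basisOn_def by auto
        have s: "(restrict_to (snd y) ({1..n} - J) j + restrict_to (snd y) I j) mod p = snd y j" for j
          using yF I IJ van2[of j] unfolding restrict_to_def Fvec_def basisOn_def by auto
        show ?thesis unfolding vadd_def w_def z_def proj_def using f s by (simp add: prod_eq_iff)
      qed
      have zC: "z \<in> C" by (rule z_in_C[OF rec I J IJ y zI wR ywz])
      have "supp z \<subseteq> I" unfolding z_def supp_def proj_def restrict_to_def by auto
      moreover have "proj I z = z" unfolding z_def proj_def restrict_to_def by (auto intro!: ext)
      ultimately show "v \<in> shorten I C"
        unfolding shorten_def v projproj z_def[symmetric] using zC by (metis (mono_tags, lifting) image_eqI mem_Collect_eq)
    qed
  next
    show "shorten I C \<subseteq> shorten I (puncture J (symp_dual n p C))"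
    proof
      fix v assume "v \<in> shorten I C"
      then obtain c where c: "c \<in> C" and supp: "supp c \<subseteq> I" and v: "v = proj I c"
        unfolding shorten_def by blast
      have "proj J c \<in> puncture J (symp_dual n p C)" unfolding puncture_def using c assms(3) by blast
      moreover have "supp (proj J c) \<subseteq> I" using supp unfolding supp_def proj_def restrict_to_def by auto
      moreover have "v = proj I (proj J c)" using v projproj by simp
      ultimately show "v \<in> shorten I (puncture J (symp_dual n p C))"
        unfolding shorten_def by blast
    qed
  qed
qed


end
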